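(* Assume (A1)–(A3) and $m_1<0$. Then $V_1=\sum_{i\ge0}\pi_1(i)\mathbb E_{(i,0)}(Y_1(1))$ is well defined, and for every $(k,\ell)\in\mathbb N\times\mathbb Z$ the random variable $Y_1(T_1(k))$ is $\mathbb P_{(k,\ell)}$-integrable with \[\mathbb E_{(k,\ell)}\bigl(Y_1(T_1(k))\bigr)=\ell+\frac{V_1}{\pi_1(k)},\] where $T_1(k)=\inf\{n>0: X_1(n)=k\}$.
   Context: Let $\mathbb N=\{0,1,2,\dots\}$ and fix an integer $k_0\ge1$. Let $\mu$, $\mu'_j$ ($0\le j<k_0$), $\mu''_i$ ($0\le i<k_0$), $\mu_{ij}$ ($0\le i,j<k_0$) be probability measures on $\mathbb Z^2$. The random walk $Z=(X(n),Y(n))$ on $\mathbb N^2$ has transition probabilities $p((i,j)\to(i',j'))$ equal to $\mu(i'-i,j'-j)$ if $i,j\ge k_0$; $\mu'_j(i'-i,j'-j)$ if $i\ge k_0$, $0\le j<k_0$; $\mu''_i(i'-i,j'-j)$ if $0\le i<k_0$, $j\ge k_0$; $\mu_{ij}(i'-i,j'-j)$ if $0\le i,j<k_0$. Assumptions: (A1) $\mu(a,b)=0$ if $a<-k_0$ or $b<-k_0$; $\mu'_j(a,b)=0$ if $a<-k_0$ or $b<-j$; $\mu''_i(a,b)=0$ if $b<-k_0$ or $a<-i$; $\mu_{ij}(a,b)=0$ if $a<-i$ or $b<-j$. (A2) There are $\delta,\gamma,C>0$ with $\sup_{(i,j)\in\mathbb N^2}\mathbb E_{(i,j)}[\exp(\delta(X(1)-i)+\gamma(Y(1)-j))]\le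 C$. (A3) $Z_0,Z_1,Z_2,Z$ are irreducible on their state spaces. $Z_0$: random walk on $\mathbb Z^2$ with increment law $\mu$; $m_1=\sum a\mu(a,b)$. $Z_1=(X_1,Y_1)$: Markov chain on $\mathbb N\times\mathbb Z$ with transitions $\mu(i'-i,j'-j)$ from $(i,j)$ if $i\ge k_0$ and $\mu''_i(i'-i,j'-j)$ if $0\le i<k_0$; $\mathbb P_{(k,\ell)},\mathbb E_{(k,\ell)}$ refer to it started at $(k,\ell)$. $Z_2$: Markov chain on $\mathbb Z\times\mathbb N$ with transitions $\mu$ if $j\ge k_0$ and $\mu'_j$ if $0\le j<k_0$. The first coordinate $X_1$ is a Markov chain on $\mathbb N$; when $m_1<0$ it is positive recurrent with invariant distribution $\pi_1$. *)

theory Defs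
  imports "HOL-Probability.Probability"
begin

type_synonym state = "int \<times> int"

text \<open>Transition kernels: the law of the increment from a given state.\<close>

definition K0 :: "(int \<times> int) pmf \<Rightarrow> state \<Rightarrow> (int \<times> int) pmf" where
  "K0 \<mu> s = \<mu>"

definition K1 :: "nat \<Rightarrow> (int \<times> int) pmf \<Rightarrow> (nat \<Rightarrow> (int \<times> int) pmf)
                  \<Rightarrow> state \<Rightarrow> (int \<times> int) pmf" where
  "K1 k0 \<mu> \<mu>'' s = (if fst s \<ge> int k0 then \<mu> else \<mu>'' (nat (fst s)))"

definition K2 :: "nat \<Rightarrow> (int \<times> int) pmf \<Rightarrow> (nat \<Rightarrow> (int \<times> int) pmf)
                  \<Rightarrow> state \<Rightarrow> (int \<times> int) pmf" where
  "K2 k0 \<mu> \<mu>' s = (if snd s \<ge> int k0 then \<mu> else \<mu>' (nat (snd s)))"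

definition KZ :: "nat \<Rightarrow> (int \<times> int) pmf \<Rightarrow> (nat \<Rightarrow> (int \<times> int) pmf)
                  \<Rightarrow> (nat \<Rightarrow> (int \<times> int) pmf) \<Rightarrow> (nat \<Rightarrow> nat \<Rightarrow> (int \<times> int) pmf)
                  \<Rightarrow> state \<Rightarrow> (int \<times> int) pmf" where
  "KZ k0 \<mu> \<mu>' \<mu>'' \<mu>ij s =
     (if fst s \<ge> int k0 \<and> snd s \<ge> int k0 then \<mu>
      else if fst s \<ge> int k0 then \<mu>' (nat (snd s))
      else if snd s \<ge> int k0 then \<mu>'' (nat (fst s))
      else \<mu>ij (nat (fst s)) (nat (snd s)))"

definition step :: "(state \<Rightarrow> (int \<times> int) pmf) \<Rightarrow> state \<Rightarrow> state \<Rightarrow> real" where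
  "step K s t = pmf (K s) (fst t - fst s, snd t - snd s)"

definition one_step :: "(state \<Rightarrow> (int \<times> int) pmf) \<Rightarrow> state \<Rightarrow> state pmf" where
  "one_step K s = map_pmf (\<lambda>d. (fst s + fst d, snd s + snd d)) (K s)"

definition irreducible_on :: "(state \<Rightarrow> state \<Rightarrow> real) \<Rightarrow> state set \<Rightarrow> bool" where
  "irreducible_on p S \<longleftrightarrow> (\<forall>s\<in>S. \<forall>t\<in>S. (s, t) \<in> {(x, y). p x y > 0}\<^sup>*)"

definition markov_process ::
  "'w measure \<Rightarrow> (nat \<Rightarrow> 'w \<Rightarrow> state) \<Rightarrow> (state \<Rightarrow> (int \<times> int) pmf) \<Rightarrow> state \<Rightarrow> bool" where
  "markov_process M Z K s0 \<longleftrightarrow>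
     prob_space M \<and>
     (\<forall>n. Z n \<in> measurable M (count_space UNIV)) \<and>
     (\<forall>n xs. measure M {\<omega> \<in> space M. \<forall>i\<le>n. Z i \<omega> = xs i} =
        (if xs 0 = s0 then (\<Prod>i<n. step K (xs i) (xs (Suc i))) else 0))"

definition pX1 :: "nat \<Rightarrow> (int \<times> int) pmf \<Rightarrow> (nat \<Rightarrow> (int \<times> int) pmf) \<Rightarrow> nat \<Rightarrow> nat \<Rightarrow> real" where
  "pX1 k0 \<mu> \<mu>'' i i' = measure_pmf.prob (K1 k0 \<mu> \<mu>'' (int i, 0)) {d. fst d = int i' - int i}"

definition T1 :: "(nat \<Rightarrow> 'w \<Rightarrow> state) \<Rightarrow> nat \<Rightarrow> 'w \<Rightarrow> nat" where
  "T1 Z k \<omega> = (LEAST n. n > 0 \<and> fst (Z n \<omega>) = int k)"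

end

theory Submission
  imports Defs
begin


lemma step_one: "step K s t = pmf (one_step K s) t"
proof -
  have "t = (\<lambda>d. (fst s + fst d, snd s + snd d)) (fst t - fst s, snd t - snd s)" by simp
  moreover have "inj (\<lambda>d::int\<times>int. (fst s + fst d, snd s + snd d))"
    by (auto simp: inj_def prod_eq_iff)
  ultimately show ?thesis
    unfolding step_def one_step_def using pmf_map_inj'[of "(\<lambda>d::int\<times>int. (fst s + fst d, snd s + snd d))" "K s" "(fst t - fst s, snd t - snd s)"]
    by simp
qed

lemma swap_cs:
  fixes f :: "'a \<Rightarrow> 'b \<Rightarrow> ennreal"
  shows "(\<integral>\<^sup>+x. \<integral>\<^sup>+y. f x y \<partial>count_space UNIV \<partial>count_space UNIV) = (\<integral>\<^sup>+y. \<integral>\<^sup>+x. f x y \<partial>count_space UNIV \<partial>count_space UNIV)"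
  using nn_integral_fst_count_space[of "case_prod f"] nn_integral_snd_count_space[of "case_prod f"] by simp

lemma expand_rv:
  fixes V :: "'w \<Rightarrow> 'a::countable" and H :: "'a \<Rightarrow> ennreal"
  assumes V[measurable]: "V \<in> measurable M (count_space UNIV)"
  shows "(\<integral>\<^sup>+\<omega>. H (V \<omega>) \<partial>M) = (\<integral>\<^sup>+v. H v * emeasure M {\<omega>\<in>space M. V \<omega> = v} \<partial>count_space UNIV)"
proof -
  have "(\<integral>\<^sup>+\<omega>. H (V \<omega>) \<partial>M) = (\<integral>\<^sup>+\<omega>. \<integral>\<^sup>+v. H v * indicator {\<omega>\<in>space M. V \<omega> = v} \<omega> \<partial>count_space UNIV \<partial>M)"
  proof (rule nn_integral_cong)
    fix \<omega> assume w: "\<omega> \<in> space M"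
    have "(\<integral>\<^sup>+v. H v * indicator {\<omega>\<in>space M. V \<omega> = v} \<omega> \<partial>count_space UNIV)
        = (\<integral>\<^sup>+v. H v * indicator {V \<omega>} v \<partial>count_space UNIV)"
      using w by (intro nn_integral_cong) (auto split: split_indicator)
    also have "\<dots> = H (V \<omega>)" by simp
    finally show "H (V \<omega>) = (\<integral>\<^sup>+v. H v * indicator {\<omega>\<in>space M. V \<omega> = v} \<omega> \<partial>count_space UNIV)" by simp
  qed
  also have "\<dots> = (\<integral>\<^sup>+v. \<integral>\<^sup>+\<omega>. H v * indicator {\<omega>\<in>space M. V \<omega> = v} \<omega> \<partial>M \<partial>count_space UNIV)"
    by (rule nn_integral_count_space_nn_integral) auto
  also have "\<dots> = (\<integral>\<^sup>+v. H v * emeasure M {\<omega>\<in>space M. V \<omega> = v} \<partial>count_space UNIV)"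
    by (intro nn_integral_cong nn_integral_cmult_indicator) auto
  finally show ?thesis .
qed

definition condL :: "int \<Rightarrow> nat \<Rightarrow> state list \<Rightarrow> bool" where
  "condL kk n xs \<longleftrightarrow> (\<forall>m\<in>{1..n}. fst (xs ! m) \<noteq> kk)"

locale mproc =
  fixes M :: "'w measure" and Z :: "nat \<Rightarrow> 'w \<Rightarrow> state" and K :: "state \<Rightarrow> (int \<times> int) pmf" and s0 :: state
  assumes mp: "markov_process M Z K s0"
begin

sublocale prob_space M using mp by (simp add: markov_process_def)

lemma mpd: "measure M {\<omega>\<in>space M. \<forall>i\<le>n. Z i \<omega> = xs i} = (if xs 0 = s0 then \<Prod>i<n. step K (xs i) (xs (Suc i)) else 0)"
  using mp unfolding markov_process_def by blast

lemma Zm[measurable]: "Z n \<in> measurable M (count_space UNIV)"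
  using mp by (simp add: markov_process_def)

definition W :: "nat \<Rightarrow> 'w \<Rightarrow> state list" where
  "W n \<omega> = map (\<lambda>j. Z j \<omega>) [0..<Suc n]"

lemma W_eq: "W n \<omega> = xs \<longleftrightarrow> length xs = Suc n \<and> (\<forall>i\<le>n. Z i \<omega> = xs ! i)"
  unfolding W_def by (auto simp: list_eq_iff_nth_eq less_Suc_eq_le simp del: upt_Suc)

lemma W_set: "{\<omega>\<in>space M. W n \<omega> = xs} =
   (if length xs = Suc n then {\<omega>\<in>space M. \<forall>i\<le>n. Z i \<omega> = xs ! i} else {})"
  by (auto simp: W_eq)

lemma W_sets[measurable]: "{\<omega>\<in>space M. W n \<omega> = xs} \<in> sets M"
proof (cases "length xs = Suc n")
  case True
  have "{\<omega>\<in>space M. \<forall>i\<le>n. Z i \<omega> = xs ! i} = (\<Inter>i\<in>{..n}. Z i -` {xs ! i} \<inter> space M)"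
    by auto
  also have "\<dots> \<in> sets M"
    by (intro sets.finite_INT) (auto intro: measurable_sets[OF Zm])
  finally show ?thesis using True W_set by simp
qed (simp add: W_set)

lemma Wm[measurable]: "W n \<in> measurable M (count_space UNIV)"
proof (subst measurable_count_space_eq2_countable, intro conjI ballI)
  fix a :: "state list"
  have "W n -` {a} \<inter> space M = {\<omega>\<in>space M. W n \<omega> = a}" by auto
  then show "W n -` {a} \<inter> space M \<in> sets M" using W_sets by simp
qed auto

lemma emW: "length xs = Suc n \<Longrightarrow> emeasure M {\<omega>\<in>space M. W n \<omega> = xs} =
   ennreal (if xs!0 = s0 then \<Prod>i<n. step K (xs!i) (xs!Suc i) else 0)"
proof -
  assume l: "length xs = Suc n"
  have "emeasure M {\<omega>\<in>space M. W n \<omega> = xs} = measure M {\<omega>\<in>space M. \<forall>i\<le>n. Z i \<omega> = (\<lambda>i. xs ! i) i}"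
    using l by (simp add: W_set emeasure_eq_measure)
  also have "\<dots> = (if xs!0 = s0 then \<Prod>i<n. step K (xs!i) (xs!Suc i) else 0)"
    using mpd[of n "\<lambda>i. xs ! i"] by simp
  finally show ?thesis by simp
qed

lemma W_Suc: "W (Suc n) \<omega> = W n \<omega> @ [Z (Suc n) \<omega>]"
  unfolding W_def by simp

lemma WZm[measurable]: "(\<lambda>\<omega>. (W n \<omega>, Z (Suc n) \<omega>)) \<in> measurable M (count_space UNIV)"
proof (subst measurable_count_space_eq2_countable, intro conjI ballI)
  fix a :: "state list \<times> state"
  have "(\<lambda>\<omega>. (W n \<omega>, Z (Suc n) \<omega>)) -` {a} \<inter> space M = {\<omega>\<in>space M. W (Suc n) \<omega> = fst a @ [snd a]}"
    by (cases a) (auto simp: W_Suc)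
  then show "(\<lambda>\<omega>. (W n \<omega>, Z (Suc n) \<omega>)) -` {a} \<inter> space M \<in> sets M" using W_sets by simp
qed auto

lemma em_WZ: "emeasure M {\<omega>\<in>space M. W n \<omega> = xs \<and> Z (Suc n) \<omega> = t} =
   emeasure M {\<omega>\<in>space M. W n \<omega> = xs} * ennreal (pmf (one_step K (last xs)) t)"
proof (cases "length xs = Suc n")
  case True
  have "{\<omega>\<in>space M. W n \<omega> = xs \<and> Z (Suc n) \<omega> = t} = {\<omega>\<in>space M. W (Suc n) \<omega> = xs @ [t]}"
    by (auto simp: W_Suc)
  then have "emeasure M {\<omega>\<in>space M. W n \<omega> = xs \<and> Z (Suc n) \<omega> = t} =
     ennreal (if (xs@[t])!0 = s0 then \<Prod>i<Suc n. step K ((xs@[t])!i) ((xs@[t])!Suc i) else 0)"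
    using True by (simp add: emW)
  also have "\<dots> = ennreal ((if xs!0 = s0 then \<Prod>i<n. step K (xs!i) (xs!Suc i) else 0) * step K (xs!n) t)"
  proof -
    have "(\<Prod>i<n. step K ((xs@[t])!i) ((xs@[t])!Suc i)) = (\<Prod>i<n. step K (xs!i) (xs!Suc i))"
      using True by (intro prod.cong) (auto simp: nth_append)
    then show ?thesis using True by (simp add: nth_append)
  qed
  also have "\<dots> = ennreal (if xs!0 = s0 then \<Prod>i<n. step K (xs!i) (xs!Suc i) else 0) * ennreal (step K (xs!n) t)"
    by (rule ennreal_mult') (simp add: step_def prod_nonneg)
  also have "\<dots> = emeasure M {\<omega>\<in>space M. W n \<omega> = xs} * ennreal (pmf (one_step K (last xs)) t)"
  proof -
    have lx: "last xs = xs ! n" using True by (cases xs rule: rev_cases) (auto simp: nth_append)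
    show ?thesis by (simp only: emW[OF True] lx step_one)
  qed
  finally show ?thesis .
next
  case False
  then show ?thesis by (auto simp: W_eq)
qed

lemma core:
  fixes G :: "state list \<Rightarrow> state \<Rightarrow> ennreal"
  shows "(\<integral>\<^sup>+\<omega>. G (W n \<omega>) (Z (Suc n) \<omega>) \<partial>M) =
    (\<integral>\<^sup>+xs. emeasure M {\<omega>\<in>space M. W n \<omega> = xs} * (\<integral>\<^sup>+t. G xs t \<partial>measure_pmf (one_step K (last xs))) \<partial>count_space UNIV)"
proof -
  have "(\<integral>\<^sup>+\<omega>. G (W n \<omega>) (Z (Suc n) \<omega>) \<partial>M) = (\<integral>\<^sup>+\<omega>. case_prod G (W n \<omega>, Z (Suc n) \<omega>) \<partial>M)"
    by simp
  also have "\<dots> = (\<integral>\<^sup>+p. case_prod G p * emeasure M {\<omega>\<in>space M. (W n \<omega>, Z (Suc n) \<omega>) = p} \<partial>count_space UNIV)"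
    by (rule expand_rv) measurable
  also have "\<dots> = (\<integral>\<^sup>+xs. \<integral>\<^sup>+t. G xs t * emeasure M {\<omega>\<in>space M. (W n \<omega>, Z (Suc n) \<omega>) = (xs, t)} \<partial>count_space UNIV \<partial>count_space UNIV)"
    by (subst nn_integral_fst_count_space[symmetric]) simp
  also have "\<dots> = (\<integral>\<^sup>+xs. emeasure M {\<omega>\<in>space M. W n \<omega> = xs} * (\<integral>\<^sup>+t. ennreal (pmf (one_step K (last xs)) t) * G xs t \<partial>count_space UNIV) \<partial>count_space UNIV)"
  proof (intro nn_integral_cong)
    fix xs
    have "(\<integral>\<^sup>+t. G xs t * emeasure M {\<omega>\<in>space M. (W n \<omega>, Z (Suc n) \<omega>) = (xs, t)} \<partial>count_space UNIV)
      = (\<integral>\<^sup>+t. emeasure M {\<omega>\<in>space M. W n \<omega> = xs} * (ennreal (pmf (one_step K (last xs)) t) * G xs t) \<partial>count_space UNIV)"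
      by (simp add: em_WZ mult_ac)
    also have "\<dots> = emeasure M {\<omega>\<in>space M. W n \<omega> = xs} * (\<integral>\<^sup>+t. ennreal (pmf (one_step K (last xs)) t) * G xs t \<partial>count_space UNIV)"
      by (rule nn_integral_cmult) simp
    finally show "(\<integral>\<^sup>+t. G xs t * emeasure M {\<omega>\<in>space M. (W n \<omega>, Z (Suc n) \<omega>) = (xs, t)} \<partial>count_space UNIV)
      = emeasure M {\<omega>\<in>space M. W n \<omega> = xs} * (\<integral>\<^sup>+t. ennreal (pmf (one_step K (last xs)) t) * G xs t \<partial>count_space UNIV)" .
  qed
  also have "\<dots> = (\<integral>\<^sup>+xs. emeasure M {\<omega>\<in>space M. W n \<omega> = xs} * (\<integral>\<^sup>+t. G xs t \<partial>measure_pmf (one_step K (last xs))) \<partial>count_space UNIV)"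
    by (simp add: nn_integral_measure_pmf)
  finally show ?thesis .
qed


lemma last_W: "last (W n \<omega>) = Z n \<omega>"
  unfolding W_def by simp

lemma nth_W: "m \<le> n \<Longrightarrow> W n \<omega> ! m = Z m \<omega>"
  unfolding W_def by (simp add: nth_map less_Suc_eq_le del: upt_Suc)

lemma group:
  fixes c :: "state list \<Rightarrow> bool" and H :: "int \<Rightarrow> ennreal"
  shows "(\<integral>\<^sup>+xs. emeasure M {\<omega>\<in>space M. W n \<omega> = xs} * (indicator {xs. c xs} xs * H (fst (last xs))) \<partial>count_space UNIV)
    = (\<integral>\<^sup>+i. H i * emeasure M {\<omega>\<in>space M. c (W n \<omega>) \<and> fst (Z n \<omega>) = i} \<partial>count_space UNIV)"
proof -
  have e: "emeasure M {\<omega>\<in>space M. c (W n \<omega>) \<and> fst (Z n \<omega>) = i} =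
     (\<integral>\<^sup>+xs. emeasure M {\<omega>\<in>space M. W n \<omega> = xs} * indicator {xs. c xs \<and> fst (last xs) = i} xs \<partial>count_space UNIV)" for i
  proof -
    have "emeasure M {\<omega>\<in>space M. c (W n \<omega>) \<and> fst (Z n \<omega>) = i} =
        (\<integral>\<^sup>+\<omega>. indicator {xs. c xs \<and> fst (last xs) = i} (W n \<omega>) \<partial>M)"
    proof -
      have "{\<omega>\<in>space M. c (W n \<omega>) \<and> fst (Z n \<omega>) = i} = W n -` {xs. c xs \<and> fst (last xs) = i} \<inter> space M"
        by (auto simp: last_W)
      moreover have "W n -` {xs. c xs \<and> fst (last xs) = i} \<inter> space M \<in> sets M"
        by (rule measurable_sets[OF Wm]) simp
      ultimately show ?thesis
        by (simp add: nn_integral_indicator[symmetric] del: nn_integral_indicator)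
           (intro nn_integral_cong, auto split: split_indicator)
    qed
    also have "\<dots> = (\<integral>\<^sup>+xs. indicator {xs. c xs \<and> fst (last xs) = i} xs * emeasure M {\<omega>\<in>space M. W n \<omega> = xs} \<partial>count_space UNIV)"
      by (rule expand_rv) simp
    finally show ?thesis by (simp add: mult_ac)
  qed
  have "(\<integral>\<^sup>+i. H i * emeasure M {\<omega>\<in>space M. c (W n \<omega>) \<and> fst (Z n \<omega>) = i} \<partial>count_space UNIV)
     = (\<integral>\<^sup>+i. \<integral>\<^sup>+xs. H i * (emeasure M {\<omega>\<in>space M. W n \<omega> = xs} * indicator {xs. c xs \<and> fst (last xs) = i} xs) \<partial>count_space UNIV \<partial>count_space UNIV)"
    by (simp add: e nn_integral_cmult)
  also have "\<dots> = (\<integral>\<^sup>+xs. \<integral>\<^sup>+i. H i * (emeasure M {\<omega>\<in>space M. W n \<omega> = xs} * indicator {xs. c xs \<and> fst (last xs) = i} xs) \<partial>count_space UNIV \<partial>count_space UNIV)"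
    by (rule swap_cs)
  also have "\<dots> = (\<integral>\<^sup>+xs. \<integral>\<^sup>+i. (emeasure M {\<omega>\<in>space M. W n \<omega> = xs} * indicator {xs. c xs} xs * H i) * indicator {fst (last xs)} i \<partial>count_space UNIV \<partial>count_space UNIV)"
    by (intro nn_integral_cong) (auto split: split_indicator simp: mult_ac)
  also have "\<dots> = (\<integral>\<^sup>+xs. emeasure M {\<omega>\<in>space M. W n \<omega> = xs} * (indicator {xs. c xs} xs * H (fst (last xs))) \<partial>count_space UNIV)"
    by (intro nn_integral_cong) (subst nn_integral_indicator_singleton, simp, simp add: mult_ac)
  finally show ?thesis ..
qed


definition Ev :: "int \<Rightarrow> nat \<Rightarrow> 'w \<Rightarrow> bool" where
  "Ev kk n \<omega> \<longleftrightarrow> (\<forall>m\<in>{1..n}. fst (Z m \<omega>) \<noteq> kk)"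

definition uu :: "int \<Rightarrow> nat \<Rightarrow> int \<Rightarrow> ennreal" where
  "uu kk n i = emeasure M {\<omega>\<in>space M. Ev kk n \<omega> \<and> fst (Z n \<omega>) = i}"

lemma Ev_W: "Ev kk n \<omega> \<longleftrightarrow> condL kk n (W n \<omega>)"
  unfolding Ev_def condL_def by (auto simp: nth_W)

lemma Ev_Suc: "Ev kk (Suc n) \<omega> \<longleftrightarrow> Ev kk n \<omega> \<and> fst (Z (Suc n) \<omega>) \<noteq> kk"
proof -
  have "{1..Suc n} = insert (Suc n) {1..n}" by auto
  then show ?thesis unfolding Ev_def by auto
qed

lemma Z_sets: "{\<omega>\<in>space M. P (Z n \<omega>)} \<in> sets M"
proof -
  have "{\<omega>\<in>space M. P (Z n \<omega>)} = Z n -` {x. P x} \<inter> space M" by auto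
  also have "\<dots> \<in> sets M" by (rule measurable_sets[OF Zm]) simp
  finally show ?thesis .
qed

lemma Ev_Z_sets: "{\<omega>\<in>space M. Ev kk n \<omega> \<and> P (Z n \<omega>)} \<in> sets M"
proof -
  have "{\<omega>\<in>space M. Ev kk n \<omega> \<and> P (Z n \<omega>)} = W n -` {xs. condL kk n xs \<and> P (last xs)} \<inter> space M"
    by (auto simp: Ev_W last_W)
  also have "\<dots> \<in> sets M" by (rule measurable_sets[OF Wm]) simp
  finally show ?thesis .
qed

lemma Ev_0: "Ev kk 0 \<omega>"
  unfolding Ev_def by auto

lemma Ev_sets[measurable]: "{\<omega>\<in>space M. Ev kk n \<omega>} \<in> sets M"
proof -
  have "{\<omega>\<in>space M. Ev kk n \<omega>} = W n -` {xs. condL kk n xs} \<inter> space M"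
    by (auto simp: Ev_W)
  also have "\<dots> \<in> sets M" by (rule measurable_sets[OF Wm]) simp
  finally show ?thesis .
qed

lemma Ev_pred[measurable]: "Measurable.pred M (Ev kk n)"
  using Ev_sets by (simp add: pred_def)

lemma group_Ev:
  fixes H :: "int \<Rightarrow> ennreal"
  shows "(\<integral>\<^sup>+xs. emeasure M {\<omega>\<in>space M. W n \<omega> = xs} * (indicator {xs. condL kk n xs} xs * H (fst (last xs))) \<partial>count_space UNIV)
    = (\<integral>\<^sup>+i. H i * uu kk n i \<partial>count_space UNIV)"
  unfolding group uu_def Ev_W ..

lemma uu_0: "uu kk 0 i = (if fst s0 = i then 1 else 0)"
proof -
  have "uu kk 0 i = emeasure M {\<omega>\<in>space M. fst (Z 0 \<omega>) = i}"
    unfolding uu_def by (simp add: Ev_0)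
  also have "\<dots> = (\<integral>\<^sup>+\<omega>. indicator {xs. fst (last xs) = i} (W 0 \<omega>) \<partial>M)"
  proof -
    have S: "{\<omega>\<in>space M. fst (Z 0 \<omega>) = i} \<in> sets M" using Z_sets[of "\<lambda>z. fst z = i" 0] by simp
    have "emeasure M {\<omega>\<in>space M. fst (Z 0 \<omega>) = i} = (\<integral>\<^sup>+\<omega>. indicator {\<omega>\<in>space M. fst (Z 0 \<omega>) = i} \<omega> \<partial>M)"
      using S by simp
    also have "\<dots> = (\<integral>\<^sup>+\<omega>. indicator {xs. fst (last xs) = i} (W 0 \<omega>) \<partial>M)"
      by (intro nn_integral_cong) (auto split: split_indicator simp: last_W)
    finally show ?thesis .
  qed
  also have "\<dots> = (\<integral>\<^sup>+xs. indicator {xs. fst (last xs) = i} xs * emeasure M {\<omega>\<in>space M. W 0 \<omega> = xs} \<partial>count_space UNIV)"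
    by (rule expand_rv) simp
  also have "\<dots> = (\<integral>\<^sup>+xs. (indicator {xs. fst (last xs) = i} xs * (if fst s0 = i then 1 else 0)) * indicator {[s0]} xs \<partial>count_space UNIV)"
  proof (intro nn_integral_cong)
    fix xs :: "state list"
    show "indicator {xs. fst (last xs) = i} xs * emeasure M {\<omega>\<in>space M. W 0 \<omega> = xs} =
      (indicator {xs. fst (last xs) = i} xs * (if fst s0 = i then 1 else 0)) * indicator {[s0]} xs"
    proof (cases "length xs = 1")
      case True
      then obtain x where "xs = [x]" by (cases xs) auto
      then show ?thesis using emW[of xs 0] by (auto split: split_indicator)
    next
      case False
      then have e: "{\<omega>\<in>space M. W 0 \<omega> = xs} = {}" by (auto simp: W_eq)
      have "xs \<noteq> [s0]" using False by auto
      then show ?thesis by (simp add: e)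
    qed
  qed
  also have "\<dots> = (if fst s0 = i then 1 else 0)" by simp
  finally show ?thesis .
qed

end

definition PK :: "(state \<Rightarrow> (int \<times> int) pmf) \<Rightarrow> int \<Rightarrow> int \<Rightarrow> ennreal" where
  "PK K i j = emeasure (measure_pmf (K (i, 0))) {d. fst d = j - i}"

definition FP :: "(state \<Rightarrow> (int \<times> int) pmf) \<Rightarrow> int \<Rightarrow> ennreal" where
  "FP K i = (\<integral>\<^sup>+d. ennreal (real_of_int (snd d)) \<partial>measure_pmf (K (i, 0)))"

definition FN :: "(state \<Rightarrow> (int \<times> int) pmf) \<Rightarrow> int \<Rightarrow> ennreal" where
  "FN K i = (\<integral>\<^sup>+d. ennreal (- real_of_int (snd d)) \<partial>measure_pmf (K (i, 0)))"

locale mproc1 = mproc +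
  assumes Kf: "\<And>s. K s = K (fst s, 0)"
begin

lemma one_step_fst: "emeasure (measure_pmf (one_step K s)) {t. fst t = j} = PK K (fst s) j"
proof -
  have "emeasure (measure_pmf (one_step K s)) {t. fst t = j} = emeasure (measure_pmf (K s)) {d. fst d = j - fst s}"
    unfolding one_step_def by (simp add: vimage_def algebra_simps)
  then show ?thesis unfolding PK_def by (metis Kf)
qed

lemma one_step_snd:
  "(\<integral>\<^sup>+t. h (snd t - snd s) \<partial>measure_pmf (one_step K s)) = (\<integral>\<^sup>+d. h (snd d) \<partial>measure_pmf (K (fst s, 0)))"
  unfolding one_step_def by (simp add: Kf[of s, symmetric])

lemma FP_os: "(\<integral>\<^sup>+t. ennreal (real_of_int (snd t - snd s)) \<partial>measure_pmf (one_step K s)) = FP K (fst s)"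
  unfolding FP_def by (rule one_step_snd)

lemma FN_os: "(\<integral>\<^sup>+t. ennreal (- real_of_int (snd t - snd s)) \<partial>measure_pmf (one_step K s)) = FN K (fst s)"
  unfolding FN_def by (rule one_step_snd)

lemma uu_Suc: "uu kk (Suc n) j = (if j = kk then 0 else \<integral>\<^sup>+i. PK K i j * uu kk n i \<partial>count_space UNIV)"
proof -
  have "uu kk (Suc n) j = (\<integral>\<^sup>+\<omega>. indicator {xs. condL kk n xs} (W n \<omega>) * indicator {t. fst t = j \<and> j \<noteq> kk} (Z (Suc n) \<omega>) \<partial>M)"
    unfolding uu_def
    by (subst nn_integral_indicator[symmetric], rule Ev_Z_sets) (auto intro!: nn_integral_cong split: split_indicator simp: Ev_Suc Ev_W[symmetric])
  also have "\<dots> = (\<integral>\<^sup>+xs. emeasure M {\<omega>\<in>space M. W n \<omega> = xs} * (\<integral>\<^sup>+t. indicator {xs. condL kk n xs} xs * indicator {t. fst t = j \<and> j \<noteq> kk} t \<partial>measure_pmf (one_step K (last xs))) \<partial>count_space UNIV)"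
    by (rule core)
  also have "\<dots> = (\<integral>\<^sup>+xs. emeasure M {\<omega>\<in>space M. W n \<omega> = xs} * (indicator {xs. condL kk n xs} xs * (if j = kk then 0 else PK K (fst (last xs)) j)) \<partial>count_space UNIV)"
    by (intro nn_integral_cong) (simp add: nn_integral_cmult one_step_fst)
  also have "\<dots> = (\<integral>\<^sup>+i. (if j = kk then 0 else PK K i j) * uu kk n i \<partial>count_space UNIV)"
    by (rule group_Ev)
  also have "\<dots> = (if j = kk then 0 else \<integral>\<^sup>+i. PK K i j * uu kk n i \<partial>count_space UNIV)"
    by simp
  finally show ?thesis .
qed

lemma em_Ev: "emeasure M {\<omega>\<in>space M. Ev kk n \<omega>} = (\<integral>\<^sup>+i. uu kk n i \<partial>count_space UNIV)"
proof -
  have "emeasure M {\<omega>\<in>space M. Ev kk n \<omega>} = (\<integral>\<^sup>+\<omega>. \<integral>\<^sup>+i. indicator {\<omega>\<in>space M. Ev kk n \<omega> \<and> fst (Z n \<omega>) = i} \<omega> \<partial>count_space UNIV \<partial>M)"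
  proof (subst nn_integral_indicator[symmetric], simp, intro nn_integral_cong)
    fix \<omega> assume "\<omega> \<in> space M"
    then have "(\<integral>\<^sup>+i. indicator {\<omega>\<in>space M. Ev kk n \<omega> \<and> fst (Z n \<omega>) = i} \<omega> \<partial>count_space UNIV)
        = (\<integral>\<^sup>+i. indicator {\<omega>\<in>space M. Ev kk n \<omega>} \<omega> * indicator {fst (Z n \<omega>)} i \<partial>count_space UNIV)"
      by (intro nn_integral_cong) (auto split: split_indicator)
    also have "\<dots> = indicator {\<omega>\<in>space M. Ev kk n \<omega>} \<omega>" by simp
    finally show "indicator {\<omega>\<in>space M. Ev kk n \<omega>} \<omega> = (\<integral>\<^sup>+i. indicator {\<omega>\<in>space M. Ev kk n \<omega> \<and> fst (Z n \<omega>) = i} \<omega> \<partial>count_space UNIV)" ..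
  qed
  also have "\<dots> = (\<integral>\<^sup>+i. \<integral>\<^sup>+\<omega>. indicator {\<omega>\<in>space M. Ev kk n \<omega> \<and> fst (Z n \<omega>) = i} \<omega> \<partial>M \<partial>count_space UNIV)"
    by (rule nn_integral_count_space_nn_integral) (auto intro: borel_measurable_indicator Ev_Z_sets)
  also have "\<dots> = (\<integral>\<^sup>+i. uu kk n i \<partial>count_space UNIV)"
    unfolding uu_def
  proof (intro nn_integral_cong)
    fix i
    show "integral\<^sup>N M (indicator {\<omega> \<in> space M. Ev kk n \<omega> \<and> fst (Z n \<omega>) = i}) =
         emeasure M {\<omega> \<in> space M. Ev kk n \<omega> \<and> fst (Z n \<omega>) = i}"
      using nn_integral_indicator[OF Ev_Z_sets[of kk n "\<lambda>z. fst z = i"]] by simp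
  qed
  finally show ?thesis .
qed

lemma D_pos: "(\<integral>\<^sup>+\<omega>. ennreal (real_of_int (snd (Z (Suc n) \<omega>) - snd (Z n \<omega>))) * indicator {\<omega>\<in>space M. Ev kk n \<omega>} \<omega> \<partial>M)
   = (\<integral>\<^sup>+i. FP K i * uu kk n i \<partial>count_space UNIV)"
proof -
  have "(\<integral>\<^sup>+\<omega>. ennreal (real_of_int (snd (Z (Suc n) \<omega>) - snd (Z n \<omega>))) * indicator {\<omega>\<in>space M. Ev kk n \<omega>} \<omega> \<partial>M)
    = (\<integral>\<^sup>+\<omega>. (\<lambda>xs t. indicator {xs. condL kk n xs} xs * ennreal (real_of_int (snd t - snd (last xs)))) (W n \<omega>) (Z (Suc n) \<omega>) \<partial>M)"
    by (intro nn_integral_cong) (auto split: split_indicator simp: Ev_W last_W)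
  also have "\<dots> = (\<integral>\<^sup>+xs. emeasure M {\<omega>\<in>space M. W n \<omega> = xs} * (indicator {xs. condL kk n xs} xs * FP K (fst (last xs))) \<partial>count_space UNIV)"
    by (subst core, intro nn_integral_cong, subst nn_integral_cmult, simp, simp only: FP_os)
  also have "\<dots> = (\<integral>\<^sup>+i. FP K i * uu kk n i \<partial>count_space UNIV)"
    by (rule group_Ev)
  finally show ?thesis .
qed

lemma D_neg: "(\<integral>\<^sup>+\<omega>. ennreal (- real_of_int (snd (Z (Suc n) \<omega>) - snd (Z n \<omega>))) * indicator {\<omega>\<in>space M. Ev kk n \<omega>} \<omega> \<partial>M)
   = (\<integral>\<^sup>+i. FN K i * uu kk n i \<partial>count_space UNIV)"
proof -
  have "(\<integral>\<^sup>+\<omega>. ennreal (- real_of_int (snd (Z (Suc n) \<omega>) - snd (Z n \<omega>))) * indicator {\<omega>\<in>space M. Ev kk n \<omega>} \<omega> \<partial>M)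
    = (\<integral>\<^sup>+\<omega>. (\<lambda>xs t. indicator {xs. condL kk n xs} xs * ennreal (- real_of_int (snd t - snd (last xs)))) (W n \<omega>) (Z (Suc n) \<omega>) \<partial>M)"
    by (intro nn_integral_cong) (auto split: split_indicator simp: Ev_W last_W)
  also have "\<dots> = (\<integral>\<^sup>+xs. emeasure M {\<omega>\<in>space M. W n \<omega> = xs} * (indicator {xs. condL kk n xs} xs * FN K (fst (last xs))) \<partial>count_space UNIV)"
    by (subst core, intro nn_integral_cong, subst nn_integral_cmult, simp, simp only: FN_os)
  also have "\<dots> = (\<integral>\<^sup>+i. FN K i * uu kk n i \<partial>count_space UNIV)"
    by (rule group_Ev)
  finally show ?thesis .
qed

end


lemma ennreal_mult_lt_top_left: "(a::ennreal) * b < top \<Longrightarrow> 0 < b \<Longrightarrow> a < top"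
  by (cases "a = top") (auto simp: ennreal_mult_top top.not_eq_extremum)

lemma ennreal_suminf_head: "(\<Sum>n. f n) = f 0 + (\<Sum>n. f (Suc n :: nat)) " for f :: "nat \<Rightarrow> ennreal"
  using sums_unique[OF sums_Suc[OF summable_sums[OF summableI[of "\<lambda>n. f (Suc n)"]]]] by (simp add: add.commute)

locale chain =
  fixes P :: "int \<Rightarrow> int \<Rightarrow> ennreal" and pi :: "int \<Rightarrow> ennreal" and kk :: int
  assumes Psum: "\<And>i. (\<integral>\<^sup>+j. P i j \<partial>count_space UNIV) = 1"
    and pisum: "(\<integral>\<^sup>+i. pi i \<partial>count_space UNIV) = 1"
    and inv: "\<And>j. pi j = (\<integral>\<^sup>+i. pi i * P i j \<partial>count_space UNIV)"
    and irr: "\<And>j. pi j = 0 \<or> (j, kk) \<in> {(a, b). P a b > 0}\<^sup>*"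
begin

lemma pi_le1: "pi j \<le> 1"
  using nn_integral_ge_point[of j UNIV pi] pisum by simp

lemma pi_step: "pi a * P a b \<le> pi b"
  using nn_integral_ge_point[of a UNIV "\<lambda>i. pi i * P i b"] inv[of b] by simp

lemma pi_kk_pos: "pi kk > 0"
proof -
  have "\<exists>j. pi j \<noteq> 0"
  proof (rule ccontr)
    assume "\<not> ?thesis"
    then have "\<And>j. pi j = 0" by blast
    then show False using pisum by simp
  qed
  then obtain j where j: "pi j \<noteq> 0" by blast
  then have "(j, kk) \<in> {(a, b). P a b > 0}\<^sup>*" using irr by blast
  then show ?thesis
  proof (induction rule: rtrancl_induct)
    case base then show ?case using j not_gr_zero by blast
  next
    case (step b c)
    then have "0 < pi b * P b c" by (simp add: ennreal_zero_less_mult_iff)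
    also have "\<dots> \<le> pi c" by (rule pi_step)
    finally show ?case .
  qed
qed

fun c :: "nat \<Rightarrow> int \<Rightarrow> ennreal" where
  "c 0 j = pi j"
| "c (Suc n) j = (\<integral>\<^sup>+i. indicator (- {kk}) i * c n i * P i j \<partial>count_space UNIV)"

fun u :: "nat \<Rightarrow> int \<Rightarrow> ennreal" where
  "u 0 j = indicator {kk} j"
| "u (Suc n) j = (if j = kk then 0 else \<integral>\<^sup>+i. P i j * u n i \<partial>count_space UNIV)"

definition v :: "nat \<Rightarrow> int \<Rightarrow> ennreal" where
  "v n j = (\<integral>\<^sup>+i. P i j * u n i \<partial>count_space UNIV)"

lemma u_Suc_v: "u (Suc n) j = indicator (- {kk}) j * v n j"
  by (simp add: v_def split: split_indicator)

lemma v0: "v 0 j = P kk j"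
proof -
  have "v 0 j = (\<integral>\<^sup>+i. P i j * indicator {kk} i \<partial>count_space UNIV)" by (simp add: v_def)
  also have "\<dots> = P kk j" by simp
  finally show ?thesis .
qed

lemma L: "pi kk * v n j + c (Suc n) j = c n j"
proof (induction n arbitrary: j)
  case 0
  have "pi kk * v 0 j + c (Suc 0) j = (\<integral>\<^sup>+i. (pi i * P i j) * indicator {kk} i \<partial>count_space UNIV) + (\<integral>\<^sup>+i. indicator (- {kk}) i * pi i * P i j \<partial>count_space UNIV)"
    by (simp add: v0)
  also have "\<dots> = (\<integral>\<^sup>+i. (pi i * P i j) * indicator {kk} i + indicator (- {kk}) i * pi i * P i j \<partial>count_space UNIV)"
    by (rule nn_integral_add[symmetric]) auto
  also have "\<dots> = (\<integral>\<^sup>+i. pi i * P i j \<partial>count_space UNIV)"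
    by (intro nn_integral_cong) (auto split: split_indicator)
  also have "\<dots> = c 0 j" using inv[of j] by simp
  finally show ?case .
next
  case (Suc n)
  have "pi kk * v (Suc n) j + c (Suc (Suc n)) j = (\<integral>\<^sup>+i. pi kk * (P i j * u (Suc n) i) \<partial>count_space UNIV) + (\<integral>\<^sup>+i. indicator (- {kk}) i * c (Suc n) i * P i j \<partial>count_space UNIV)"
    by (simp add: v_def nn_integral_cmult del: u.simps)
  also have "\<dots> = (\<integral>\<^sup>+i. pi kk * (P i j * u (Suc n) i) + indicator (- {kk}) i * c (Suc n) i * P i j \<partial>count_space UNIV)"
    by (rule nn_integral_add[symmetric]) auto
  also have "\<dots> = (\<integral>\<^sup>+i. indicator (- {kk}) i * (pi kk * v n i + c (Suc n) i) * P i j \<partial>count_space UNIV)"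
    by (intro nn_integral_cong) (simp add: u_Suc_v algebra_simps split: split_indicator del: u.simps c.simps)
  also have "\<dots> = c (Suc n) j" by (simp add: Suc.IH del: c.simps) simp
  finally show ?case .
qed

lemma c_mono: "c (Suc n) j \<le> c n j"
  using L[of n j] by (metis add.commute le_iff_add)

lemma c_le: "c n j \<le> pi j"
proof (induction n)
  case (Suc n) then show ?case using c_mono[of n j] by order
qed simp

lemma tele: "j \<noteq> kk \<Longrightarrow> pi kk * (\<Sum>n<N. u (Suc n) j) + c N j = pi j"
proof (induction N)
  case 0 then show ?case by simp
next
  case (Suc N)
  have "pi kk * (\<Sum>n<Suc N. u (Suc n) j) + c (Suc N) j = pi kk * (\<Sum>n<N. u (Suc n) j) + (pi kk * v N j + c (Suc N) j)"
    using Suc.prems by (simp add: u_Suc_v distrib_left add_ac del: u.simps c.simps)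
  also have "\<dots> = pi j" using L[of N j] Suc by simp
  finally show ?case .
qed

definition s :: "nat \<Rightarrow> ennreal" where
  "s n = (\<integral>\<^sup>+j. indicator (- {kk}) j * c n j \<partial>count_space UNIV)"

lemma s_step: "s n = c (Suc n) kk + s (Suc n)"
proof -
  have "(\<integral>\<^sup>+j. c (Suc n) j \<partial>count_space UNIV) = (\<integral>\<^sup>+j. \<integral>\<^sup>+i. indicator (- {kk}) i * c n i * P i j \<partial>count_space UNIV \<partial>count_space UNIV)"
    by simp
  also have "\<dots> = (\<integral>\<^sup>+i. \<integral>\<^sup>+j. (indicator (- {kk}) i * c n i) * P i j \<partial>count_space UNIV \<partial>count_space UNIV)"
    using nn_integral_fst_count_space[of "\<lambda>(j, i). indicator (- {kk}) i * c n i * P i j"]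
      nn_integral_snd_count_space[of "\<lambda>(j, i). indicator (- {kk}) i * c n i * P i j"] by simp
  also have "\<dots> = s n"
    unfolding s_def by (intro nn_integral_cong) (simp add: nn_integral_cmult Psum)
  finally have a: "(\<integral>\<^sup>+j. c (Suc n) j \<partial>count_space UNIV) = s n" .
  have "(\<integral>\<^sup>+j. c (Suc n) j \<partial>count_space UNIV) = (\<integral>\<^sup>+j. c (Suc n) j * indicator {kk} j + indicator (- {kk}) j * c (Suc n) j \<partial>count_space UNIV)"
    by (intro nn_integral_cong) (auto split: split_indicator simp del: c.simps)
  also have "\<dots> = c (Suc n) kk + s (Suc n)"
    unfolding s_def by (subst nn_integral_add) (auto simp del: c.simps)
  finally show ?thesis using a by simp
qed

lemma s0_le: "s 0 \<le> 1"
proof -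
  have "s 0 \<le> (\<integral>\<^sup>+j. pi j \<partial>count_space UNIV)"
    unfolding s_def by (intro nn_integral_mono) (auto split: split_indicator)
  then show ?thesis using pisum by simp
qed

lemma ckk_sum: "(\<Sum>N. c (Suc N) kk) \<le> 1"
proof (rule suminf_le_const)
  fix M
  have "s 0 = (\<Sum>N<M. c (Suc N) kk) + s M"
    by (induction M) (auto simp: s_step[of 0] add_ac simp del: c.simps, metis s_step add.assoc add.commute)
  then have "(\<Sum>N<M. c (Suc N) kk) \<le> s 0" by (metis le_iff_add)
  then show "(\<Sum>N<M. c (Suc N) kk) \<le> 1" using s0_le by order
qed simp

lemma Q: "(j, kk) \<in> {(a, b). P a b > 0}\<^sup>* \<Longrightarrow> (\<Sum>N. c (Suc N) j) < top"
proof (induction rule: converse_rtrancl_induct)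
  case base then show ?case using ckk_sum by (simp add: order_le_less_trans del: c.simps)
next
  case (step j j')
  show ?case
  proof (cases "j = kk")
    case True then show ?thesis using ckk_sum by (simp add: order_le_less_trans del: c.simps)
  next
    case False
    have Ppos: "P j j' > 0" using step by simp
    have Pfin: "P j j' < top" using nn_integral_ge_point[of j' UNIV "P j"] Psum[of j]
      by (simp add: order_le_less_trans)
    have le: "c (Suc N) j * P j j' \<le> c (Suc (Suc N)) j'" for N
    proof -
      have "c (Suc N) j * P j j' = indicator (- {kk}) j * c (Suc N) j * P j j'" using False by simp
      also have "\<dots> \<le> c (Suc (Suc N)) j'"
        using nn_integral_ge_point[of j UNIV "\<lambda>i. indicator (- {kk}) i * c (Suc N) i * P i j'"]
        by (simp only: c.simps(2)) simp
      finally show ?thesis .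
    qed
    have "(\<Sum>N. c (Suc N) j) * P j j' = (\<Sum>N. c (Suc N) j * P j j')"
      by (simp add: ennreal_suminf_multc)
    also have "\<dots> \<le> (\<Sum>N. c (Suc (Suc N)) j')"
      by (intro suminf_le le) auto
    also have "\<dots> \<le> (\<Sum>N. c (Suc N) j')"
      using ennreal_suminf_head[of "\<lambda>N. c (Suc N) j'"] by (simp del: c.simps)
    also have "\<dots> < top" by (rule step.IH)
    finally have "(\<Sum>N. c (Suc N) j) * P j j' < top" .
    then show ?thesis by (rule ennreal_mult_lt_top_left[OF _ Ppos])
  qed
qed

lemma c_lim: "(j, kk) \<in> {(a, b). P a b > 0}\<^sup>* \<Longrightarrow> (\<lambda>N. c N j) \<longlonglongrightarrow> 0"
proof -
  assume r: "(j, kk) \<in> {(a, b). P a b > 0}\<^sup>*"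
  define r where "r N = enn2real (c (Suc N) j)" for N
  have fin: "c (Suc N) j = ennreal (r N)" for N
  proof -
    have "c (Suc N) j < top" using c_le[of "Suc N" j] pi_le1[of j] ennreal_one_less_top by order
    then show ?thesis unfolding r_def by (simp del: c.simps)
  qed
  have "(\<Sum>N. ennreal (r N)) = (\<Sum>N. c (Suc N) j)" using fin by (simp del: c.simps)
  then have "summable r"
    using Q[OF r] by (intro summable_suminf_not_top) (auto simp: r_def simp del: c.simps)
  then have "r \<longlonglongrightarrow> 0" by (rule summable_LIMSEQ_zero)
  then have "(\<lambda>N. ennreal (r N)) \<longlonglongrightarrow> ennreal 0" by (rule tendsto_ennrealI)
  then have "(\<lambda>N. c (Suc N) j) \<longlonglongrightarrow> 0" by (simp add: fin del: c.simps)
  then show ?thesis by (rule LIMSEQ_imp_Suc)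
qed

lemma main_sum: "pi kk * (\<Sum>n. u n j) = pi j"
proof (cases "j = kk")
  case True
  have "(\<Sum>n. u n j) = u 0 j + (\<Sum>n. u (Suc n) j)" by (rule ennreal_suminf_head)
  then show ?thesis using True by simp
next
  case False
  have h: "(\<Sum>n. u n j) = (\<Sum>n. u (Suc n) j)"
    using ennreal_suminf_head[of "\<lambda>n. u n j"] False by simp
  show ?thesis
  proof (cases "pi j = 0")
    case True
    have "pi kk * (\<Sum>n. u (Suc n) j) \<le> pi j"
      unfolding ennreal_suminf_cmult[symmetric]
    proof (rule suminf_le_const)
      fix N
      have "(\<Sum>n<N. pi kk * u (Suc n) j) \<le> pi kk * (\<Sum>n<N. u (Suc n) j) + c N j"
        by (simp add: sum_distrib_left del: u.simps)
      then show "(\<Sum>n<N. pi kk * u (Suc n) j) \<le> pi j" using tele[OF False, of N] by simp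
    qed simp
    then show ?thesis using True h by simp
  next
    case F2: False
    then have r: "(j, kk) \<in> {(a, b). P a b > 0}\<^sup>*" using irr by blast
    have lim1: "(\<lambda>N. pi kk * (\<Sum>n<N. u (Suc n) j) + c N j) \<longlonglongrightarrow> pi kk * (\<Sum>n. u (Suc n) j) + 0"
    proof -
      have pk: "pi kk < top" using pi_le1[of kk] ennreal_one_less_top by order
      show ?thesis by (intro tendsto_add ennreal_tendsto_cmult pk c_lim[OF r] summable_LIMSEQ) auto
    qed
    have "(\<lambda>N. pi kk * (\<Sum>n<N. u (Suc n) j) + c N j) = (\<lambda>N. pi j)"
      using tele[OF False] by simp
    then have "pi kk * (\<Sum>n. u (Suc n) j) + 0 = pi j"
      using lim1 by (simp add: LIMSEQ_const_iff)
    then show ?thesis using h by simp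
  qed
qed

end


lemma int_to_nat:
  fixes g :: "int \<Rightarrow> ennreal"
  assumes "\<And>i. i < 0 \<Longrightarrow> g i = 0"
  shows "(\<integral>\<^sup>+i. g i \<partial>count_space UNIV) = (\<integral>\<^sup>+n. g (int n) \<partial>count_space UNIV)"
proof -
  have b: "bij_betw int UNIV {0..}"
    by (auto simp: bij_betw_def inj_on_def image_def intro!: exI[of _ "nat x" for x])
  have "(\<integral>\<^sup>+i. g i \<partial>count_space UNIV) = (\<integral>\<^sup>+i. g i \<partial>count_space {0..})"
    using assms by (intro nn_integral_count_space_eq) auto
  also have "\<dots> = (\<integral>\<^sup>+n. g (int n) \<partial>count_space UNIV)"
    by (rule nn_integral_bij_count_space[OF b, symmetric])
  finally show ?thesis .
qed

lemma ennreal_abs: "ennreal \<bar>x\<bar> = ennreal x + ennreal (- x)"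
  by (cases "x \<ge> 0") (auto simp: ennreal_neg)

locale setting =
  fixes k0 :: nat
    and \<mu> :: "(int \<times> int) pmf"
    and \<mu>' \<mu>'' :: "nat \<Rightarrow> (int \<times> int) pmf"
    and \<mu>ij :: "nat \<Rightarrow> nat \<Rightarrow> (int \<times> int) pmf"
    and \<delta> \<gamma> C :: real
    and \<pi>1 :: "nat pmf"
  assumes k0: "k0 \<ge> 1"
    and A1_mu: "\<And>a b. a < - int k0 \<or> b < - int k0 \<Longrightarrow> pmf \<mu> (a, b) = 0"
    and A1_mu'': "\<And>i a b. i < k0 \<Longrightarrow> b < - int k0 \<or> a < - int i \<Longrightarrow> pmf (\<mu>'' i) (a, b) = 0"
    and A2: "\<delta> > 0" "\<gamma> > 0" "C > 0"
      "\<And>i j. (\<integral>\<^sup>+ d. ennreal (exp (\<delta> * real_of_int (fst d) + \<gamma> * real_of_int (snd d)))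
                 \<partial>measure_pmf (KZ k0 \<mu> \<mu>' \<mu>'' \<mu>ij (int i, int j))) \<le> ennreal C"
    and A3: "irreducible_on (step (K1 k0 \<mu> \<mu>'')) {s. fst s \<ge> 0}"
    and pi1_inv: "\<And>i'. pmf \<pi>1 i' = (\<Sum>i. pmf \<pi>1 i * pX1 k0 \<mu> \<mu>'' i i')"
begin

abbreviation "K \<equiv> K1 k0 \<mu> \<mu>''"

lemma Kf: "K s = K (fst s, 0)"
  by (simp add: K1_def)

lemma Kneg: "i < 0 \<Longrightarrow> K (i, 0) = K (0, 0)"
  using k0 by (simp add: K1_def)

lemma supp: assumes "d \<in> set_pmf (K (i, 0))" "i \<ge> 0"
  shows "fst d \<ge> - int k0" "snd d \<ge> - int k0" "i + fst d \<ge> 0"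
proof -
  have nz: "pmf (K (i, 0)) (fst d, snd d) \<noteq> 0" using assms(1) by (simp add: set_pmf_iff)
  show "fst d \<ge> - int k0" "snd d \<ge> - int k0" "i + fst d \<ge> 0"
  proof (atomize (full), cases "i \<ge> int k0")
    case True
    then have "pmf \<mu> (fst d, snd d) \<noteq> 0" using nz by (simp add: K1_def)
    then have "\<not> (fst d < - int k0 \<or> snd d < - int k0)" using A1_mu by blast
    then show "- int k0 \<le> fst d \<and> - int k0 \<le> snd d \<and> 0 \<le> i + fst d" using True by linarith
  next
    case False
    then have "pmf (\<mu>'' (nat i)) (fst d, snd d) \<noteq> 0" using nz by (simp add: K1_def)
    moreover have "nat i < k0" using False assms(2) by linarith
    ultimately have "\<not> (snd d < - int k0 \<or> fst d < - int (nat i))" using A1_mu'' by blast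
    then show "- int k0 \<le> fst d \<and> - int k0 \<le> snd d \<and> 0 \<le> i + fst d" using False assms(2) by linarith
  qed
qed

lemma supp': assumes "d \<in> set_pmf (K (i, 0))"
  shows "fst d \<ge> - int k0" "snd d \<ge> - int k0"
proof -
  have "d \<in> set_pmf (K (max i 0, 0))" using assms Kneg[of i] by (cases "i < 0") (auto simp: max_def)
  then show "fst d \<ge> - int k0" "snd d \<ge> - int k0" using supp[of d "max i 0"] by auto
qed

lemma KZ_eq: "i \<ge> 0 \<Longrightarrow> KZ k0 \<mu> \<mu>' \<mu>'' \<mu>ij (int (nat i), int k0) = K (i, 0)"
  by (simp add: KZ_def K1_def)

lemma A2K: "(\<integral>\<^sup>+ d. ennreal (exp (\<delta> * real_of_int (fst d) + \<gamma> * real_of_int (snd d))) \<partial>measure_pmf (K (i, 0))) \<le> ennreal C"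
proof (cases "i \<ge> 0")
  case True
  then show ?thesis using A2(4)[of "nat i" k0] KZ_eq[OF True] by simp
next
  case False
  then show ?thesis using A2(4)[of 0 k0] KZ_eq[of 0] Kneg[of i] by simp
qed

definition B :: real where "B = C * exp (\<delta> * k0) / \<gamma>"

lemma FP_le: "FP K i \<le> ennreal B"
proof -
  have "FP K i \<le> (\<integral>\<^sup>+ d. ennreal (exp (\<delta> * real_of_int (fst d) + \<gamma> * real_of_int (snd d))) * ennreal (exp (\<delta> * k0) / \<gamma>) \<partial>measure_pmf (K (i, 0)))"
    unfolding FP_def
  proof (intro nn_integral_mono_AE, unfold AE_measure_pmf_iff, intro ballI)
    fix d assume d: "d \<in> set_pmf (K (i, 0))"
    have "\<delta> * real_of_int (fst d) + \<delta> * k0 \<ge> 0"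
      using supp'(1)[OF d] A2(1) by (simp add: distrib_left[symmetric])
    then have "exp (\<gamma> * real_of_int (snd d)) \<le> exp (\<delta> * real_of_int (fst d) + \<gamma> * real_of_int (snd d)) * exp (\<delta> * k0)"
      by (simp add: exp_add[symmetric])
    moreover have "\<gamma> * real_of_int (snd d) \<le> exp (\<gamma> * real_of_int (snd d))"
      using exp_ge_add_one_self[of "\<gamma> * real_of_int (snd d)"] by linarith
    ultimately have "\<gamma> * real_of_int (snd d) \<le> exp (\<delta> * real_of_int (fst d) + \<gamma> * real_of_int (snd d)) * exp (\<delta> * k0)"
      by linarith
    then have "real_of_int (snd d) \<le> exp (\<delta> * real_of_int (fst d) + \<gamma> * real_of_int (snd d)) * (exp (\<delta> * k0) / \<gamma>)"
      using A2(2) by (simp add: field_simps)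
    then show "ennreal (real_of_int (snd d)) \<le> ennreal (exp (\<delta> * real_of_int (fst d) + \<gamma> * real_of_int (snd d))) * ennreal (exp (\<delta> * k0) / \<gamma>)"
      using A2(2) by (simp add: ennreal_mult'[symmetric] ennreal_leI)
  qed
  also have "\<dots> = (\<integral>\<^sup>+ d. ennreal (exp (\<delta> * real_of_int (fst d) + \<gamma> * real_of_int (snd d))) \<partial>measure_pmf (K (i, 0))) * ennreal (exp (\<delta> * k0) / \<gamma>)"
    by (rule nn_integral_multc) auto
  also have "\<dots> \<le> ennreal C * ennreal (exp (\<delta> * k0) / \<gamma>)"
    by (intro mult_right_mono A2K) simp
  also have "\<dots> = ennreal B"
    unfolding B_def using A2 by (simp add: ennreal_mult'[symmetric])
  finally show ?thesis .
qed

lemma FN_le: "FN K i \<le> ennreal k0"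
proof -
  have "FN K i \<le> (\<integral>\<^sup>+ d. ennreal k0 \<partial>measure_pmf (K (i, 0)))"
    unfolding FN_def
    by (intro nn_integral_mono_AE, unfold AE_measure_pmf_iff, intro ballI) (auto intro!: ennreal_leI dest: supp'(2))
  also have "\<dots> = ennreal k0" by simp
  finally show ?thesis .
qed

lemma B_nonneg: "B \<ge> 0"
  unfolding B_def using A2 by simp


definition pi' :: "int \<Rightarrow> ennreal" where
  "pi' i = (if i \<ge> 0 then ennreal (pmf \<pi>1 (nat i)) else 0)"

lemma Psum: "(\<integral>\<^sup>+j. PK K i j \<partial>count_space UNIV) = 1"
proof -
  have "(\<integral>\<^sup>+j. PK K i j \<partial>count_space UNIV) = (\<integral>\<^sup>+j. \<integral>\<^sup>+d. indicator {d. fst d = j - i} d \<partial>measure_pmf (K (i, 0)) \<partial>count_space UNIV)"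
    unfolding PK_def by (intro nn_integral_cong) simp
  also have "\<dots> = (\<integral>\<^sup>+d. \<integral>\<^sup>+j. indicator {d. fst d = j - i} d \<partial>count_space UNIV \<partial>measure_pmf (K (i, 0)))"
    by (rule nn_integral_count_space_nn_integral[symmetric]) auto
  also have "\<dots> = (\<integral>\<^sup>+d. 1 \<partial>measure_pmf (K (i, 0)))"
  proof (intro nn_integral_cong)
    fix d :: "int \<times> int"
    have "(\<integral>\<^sup>+j. indicator {d. fst d = j - i} d \<partial>count_space UNIV) = (\<integral>\<^sup>+j. 1 * indicator {fst d + i} j \<partial>count_space UNIV)"
      by (intro nn_integral_cong) (auto split: split_indicator)
    also have "\<dots> = 1" by (subst nn_integral_indicator_singleton) auto
    finally show "(\<integral>\<^sup>+j. indicator {d. fst d = j - i} d \<partial>count_space UNIV) = 1" .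
  qed
  also have "\<dots> = 1" by simp
  finally show ?thesis .
qed

lemma PK_neg: "i \<ge> 0 \<Longrightarrow> j < 0 \<Longrightarrow> PK K i j = 0"
proof -
  assume a: "i \<ge> 0" "j < 0"
  have "set_pmf (K (i, 0)) \<inter> {d. fst d = j - i} = {}"
    using supp(3)[OF _ a(1)] a(2) by fastforce
  then have "measure (measure_pmf (K (i, 0))) {d. fst d = j - i} = 0"
    by (simp add: measure_pmf_zero_iff)
  then show ?thesis unfolding PK_def by (simp add: measure_pmf.emeasure_eq_measure)
qed

lemma PK_nat: "PK K (int n) (int m) = ennreal (pX1 k0 \<mu> \<mu>'' n m)"
  unfolding PK_def pX1_def by (simp add: measure_pmf.emeasure_eq_measure)

lemma summable_pi1: "summable (\<lambda>n. pmf \<pi>1 n)"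
proof -
  have "(\<Sum>n. ennreal (pmf \<pi>1 n)) = (\<integral>\<^sup>+n. pmf \<pi>1 n \<partial>count_space UNIV)"
    by (simp add: nn_integral_count_space_nat)
  also have "\<dots> = 1" by (simp add: nn_integral_pmf)
  finally show ?thesis by (intro summable_suminf_not_top) auto
qed

lemma pX1_le1: "pX1 k0 \<mu> \<mu>'' n m \<le> 1"
  unfolding pX1_def by simp

lemma pX1_nonneg: "pX1 k0 \<mu> \<mu>'' n m \<ge> 0"
  unfolding pX1_def by simp

lemma pisum: "(\<integral>\<^sup>+i. pi' i \<partial>count_space UNIV) = 1"
proof -
  have "(\<integral>\<^sup>+i. pi' i \<partial>count_space UNIV) = (\<integral>\<^sup>+n. pi' (int n) \<partial>count_space UNIV)"
    by (rule int_to_nat) (simp add: pi'_def)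
  also have "\<dots> = (\<integral>\<^sup>+n. pmf \<pi>1 n \<partial>count_space UNIV)"
    by (simp add: pi'_def)
  also have "\<dots> = 1" by (simp add: nn_integral_pmf)
  finally show ?thesis .
qed

lemma pi_inv: "pi' j = (\<integral>\<^sup>+i. pi' i * PK K i j \<partial>count_space UNIV)"
proof -
  have "(\<integral>\<^sup>+i. pi' i * PK K i j \<partial>count_space UNIV) = (\<integral>\<^sup>+n. pi' (int n) * PK K (int n) j \<partial>count_space UNIV)"
    by (rule int_to_nat) (simp add: pi'_def)
  also have "\<dots> = pi' j"
  proof (cases "j \<ge> 0")
    case True
    then obtain m where m: "j = int m" by (metis nonneg_eq_int)
    have "(\<integral>\<^sup>+n. pi' (int n) * PK K (int n) j \<partial>count_space UNIV) = (\<Sum>n. ennreal (pmf \<pi>1 n * pX1 k0 \<mu> \<mu>'' n m))"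
      by (simp add: nn_integral_count_space_nat pi'_def m PK_nat ennreal_mult' pX1_nonneg)
    also have "\<dots> = ennreal (\<Sum>n. pmf \<pi>1 n * pX1 k0 \<mu> \<mu>'' n m)"
    proof (rule suminf_ennreal2)
      show "summable (\<lambda>n. pmf \<pi>1 n * pX1 k0 \<mu> \<mu>'' n m)"
        by (rule summable_comparison_test'[OF summable_pi1, of 0])
           (simp add: pX1_nonneg mult_left_le pX1_le1)
    qed (simp add: pX1_nonneg)
    also have "\<dots> = pi' j" using pi1_inv[of m] by (simp add: pi'_def m)
    finally show ?thesis .
  next
    case False
    then show ?thesis by (simp add: PK_neg pi'_def)
  qed
  finally show ?thesis ..
qed

lemma step_PK: "step K x y > 0 \<Longrightarrow> PK K (fst x) (fst y) > 0"
proof -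
  assume p: "step K x y > 0"
  have "ennreal (step K x y) = emeasure (measure_pmf (K x)) {(fst y - fst x, snd y - snd x)}"
    by (simp add: step_def emeasure_pmf_single)
  also have "\<dots> \<le> emeasure (measure_pmf (K x)) {d. fst d = fst y - fst x}"
    by (intro emeasure_mono) auto
  also have "\<dots> = PK K (fst x) (fst y)"
    unfolding PK_def using Kf[of x] by simp
  finally have "ennreal (step K x y) \<le> PK K (fst x) (fst y)" .
  moreover have "0 < ennreal (step K x y)" using p by simp
  ultimately show ?thesis by order
qed

lemma reach: "(x, y) \<in> {(x, y). step K x y > 0}\<^sup>* \<Longrightarrow> (fst x, fst y) \<in> {(a, b). PK K a b > 0}\<^sup>*"
proof (induction rule: rtrancl_induct)
  case (step y z)
  then show ?case using step_PK[of y z] by (auto intro: rtrancl_into_rtrancl)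
qed simp

lemma irr: "pi' j = 0 \<or> (j, int k) \<in> {(a, b). PK K a b > 0}\<^sup>*"
proof (cases "j \<ge> 0")
  case True
  then have "((j, 0), (int k, 0)) \<in> {(x, y). step K x y > 0}\<^sup>*"
    using A3 unfolding irreducible_on_def by auto
  then show ?thesis using reach[of "(j, 0)" "(int k, 0)"] by simp
qed (simp add: pi'_def)

lemma chain: "chain (PK K) pi' (int k)"
  by unfold_locales (rule Psum, rule pisum, rule pi_inv, rule irr)

end

locale proc = setting +
  fixes k :: nat and l :: int and M :: "'w measure" and Z :: "nat \<Rightarrow> 'w \<Rightarrow> state"
  assumes mpZ: "markov_process M Z (K1 k0 \<mu> \<mu>'') (int k, l)"
begin

sublocale mproc1 M Z K "(int k, l)"
  by unfold_locales (use mpZ Kf in auto)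

sublocale ch: chain "PK K" pi' "int k"
  by (rule chain)

lemma uu_eq: "uu (int k) n j = ch.u n j"
proof (induction n arbitrary: j)
  case 0 then show ?case by (simp add: uu_0 split: split_indicator)
next
  case (Suc n)
  have "uu (int k) (Suc n) j = (if j = int k then 0 else \<integral>\<^sup>+i. PK K i j * uu (int k) n i \<partial>count_space UNIV)"
    by (rule uu_Suc)
  also have "\<dots> = ch.u (Suc n) j" by (simp only: Suc.IH ch.u.simps)
  finally show ?case .
qed

lemma sum_uu: "pi' (int k) * (\<Sum>n. uu (int k) n j) = pi' j"
  unfolding uu_eq by (rule ch.main_sum)

lemma pik: "pi' (int k) = ennreal (pmf \<pi>1 k)"
  by (simp add: pi'_def)

lemma pik_pos: "pmf \<pi>1 k > 0"
  using ch.pi_kk_pos by (simp add: pik)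

lemma sum_uu_int: "pi' (int k) * (\<integral>\<^sup>+j. H j * (\<Sum>n. uu (int k) n j) \<partial>count_space UNIV) = (\<integral>\<^sup>+j. H j * pi' j \<partial>count_space UNIV)"
proof -
  have "pi' (int k) * (\<integral>\<^sup>+j. H j * (\<Sum>n. uu (int k) n j) \<partial>count_space UNIV) = (\<integral>\<^sup>+j. H j * (pi' (int k) * (\<Sum>n. uu (int k) n j)) \<partial>count_space UNIV)"
    by (subst nn_integral_cmult[symmetric]) (auto simp: mult_ac)
  then show ?thesis by (simp add: sum_uu)
qed

lemma D_meas[measurable]: "(\<lambda>\<omega>. real_of_int (snd (Z (Suc n) \<omega>) - snd (Z n \<omega>))) \<in> borel_measurable M"
  using measurable_compose[OF WZm, of "\<lambda>p. real_of_int (snd (snd p) - snd (last (fst p)))" borel]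
  by (simp add: last_W)

lemma sumE: "pi' (int k) * (\<Sum>n. emeasure M {\<omega>\<in>space M. Ev (int k) n \<omega>}) = 1"
proof -
  have "(\<Sum>n. emeasure M {\<omega>\<in>space M. Ev (int k) n \<omega>}) = (\<Sum>n. \<integral>\<^sup>+j. uu (int k) n j \<partial>count_space UNIV)"
    by (simp add: em_Ev)
  also have "\<dots> = (\<integral>\<^sup>+j. 1 * (\<Sum>n. uu (int k) n j) \<partial>count_space UNIV)"
    by (subst nn_integral_suminf[symmetric]) auto
  finally show ?thesis using sum_uu_int[of "\<lambda>_. 1"] pisum by simp
qed

definition Dp :: "nat \<Rightarrow> 'w \<Rightarrow> ennreal" where
  "Dp n \<omega> = ennreal (real_of_int (snd (Z (Suc n) \<omega>) - snd (Z n \<omega>))) * indicator {\<omega>\<in>space M. Ev (int k) n \<omega>} \<omega>"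

definition Dn :: "nat \<Rightarrow> 'w \<Rightarrow> ennreal" where
  "Dn n \<omega> = ennreal (- real_of_int (snd (Z (Suc n) \<omega>) - snd (Z n \<omega>))) * indicator {\<omega>\<in>space M. Ev (int k) n \<omega>} \<omega>"

lemma Dp_meas[measurable]: "Dp n \<in> borel_measurable M"
  unfolding Dp_def by measurable

lemma Dn_meas[measurable]: "Dn n \<in> borel_measurable M"
  unfolding Dn_def by measurable

lemma Sp_int: "pi' (int k) * (\<integral>\<^sup>+\<omega>. (\<Sum>n. Dp n \<omega>) \<partial>M) = (\<integral>\<^sup>+j. FP K j * pi' j \<partial>count_space UNIV)"
proof -
  have "(\<integral>\<^sup>+\<omega>. (\<Sum>n. Dp n \<omega>) \<partial>M) = (\<Sum>n. \<integral>\<^sup>+i. FP K i * uu (int k) n i \<partial>count_space UNIV)"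
  proof -
    have "(\<integral>\<^sup>+\<omega>. (\<Sum>n. Dp n \<omega>) \<partial>M) = (\<Sum>n. integral\<^sup>N M (Dp n))"
      by (rule nn_integral_suminf) measurable
    also have "(\<lambda>n. integral\<^sup>N M (Dp n)) = (\<lambda>n. \<integral>\<^sup>+i. FP K i * uu (int k) n i \<partial>count_space UNIV)"
      by (intro ext, unfold Dp_def[abs_def], rule D_pos)
    finally show ?thesis .
  qed
  also have "\<dots> = (\<integral>\<^sup>+i. FP K i * (\<Sum>n. uu (int k) n i) \<partial>count_space UNIV)"
    by (subst nn_integral_suminf[symmetric]) (auto simp: ennreal_suminf_cmult)
  finally show ?thesis by (simp add: sum_uu_int)
qed

lemma Sn_int: "pi' (int k) * (\<integral>\<^sup>+\<omega>. (\<Sum>n. Dn n \<omega>) \<partial>M) = (\<integral>\<^sup>+j. FN K j * pi' j \<partial>count_space UNIV)"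
proof -
  have "(\<integral>\<^sup>+\<omega>. (\<Sum>n. Dn n \<omega>) \<partial>M) = (\<Sum>n. \<integral>\<^sup>+i. FN K i * uu (int k) n i \<partial>count_space UNIV)"
  proof -
    have "(\<integral>\<^sup>+\<omega>. (\<Sum>n. Dn n \<omega>) \<partial>M) = (\<Sum>n. integral\<^sup>N M (Dn n))"
      by (rule nn_integral_suminf) measurable
    also have "(\<lambda>n. integral\<^sup>N M (Dn n)) = (\<lambda>n. \<integral>\<^sup>+i. FN K i * uu (int k) n i \<partial>count_space UNIV)"
      by (intro ext, unfold Dn_def[abs_def], rule D_neg)
    finally show ?thesis .
  qed
  also have "\<dots> = (\<integral>\<^sup>+i. FN K i * (\<Sum>n. uu (int k) n i) \<partial>count_space UNIV)"
    by (subst nn_integral_suminf[symmetric]) (auto simp: ennreal_suminf_cmult)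
  finally show ?thesis by (simp add: sum_uu_int)
qed


lemma ennreal_lim0:
  fixes f :: "nat \<Rightarrow> ennreal"
  assumes "(\<Sum>n. f n) < top"
  shows "f \<longlonglongrightarrow> 0"
proof -
  have le: "f n \<le> (\<Sum>n. f n)" for n
    using sum_le_suminf[of f "{n}"] by simp
  define r where "r n = enn2real (f n)" for n
  have fin: "f n = ennreal (r n)" for n
    unfolding r_def using le[of n] assms by (simp add: order_le_less_trans)
  have "(\<Sum>n. ennreal (r n)) < top" using assms fin by simp
  then have "summable r" by (intro summable_suminf_not_top) (auto simp: r_def)
  then have "r \<longlonglongrightarrow> 0" by (rule summable_LIMSEQ_zero)
  then have "(\<lambda>n. ennreal (r n)) \<longlonglongrightarrow> ennreal 0" by (rule tendsto_ennrealI)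
  then show ?thesis by (simp add: fin[abs_def])
qed

lemma E_fin: "(\<Sum>n. emeasure M {\<omega>\<in>space M. Ev (int k) n \<omega>}) < top"
proof (rule ccontr)
  assume "\<not> ?thesis"
  then have "(\<Sum>n. emeasure M {\<omega>\<in>space M. Ev (int k) n \<omega>}) = top" using top.not_eq_extremum by blast
  then show False using sumE ch.pi_kk_pos by (simp add: ennreal_mult_top split: if_splits)
qed

lemma AE_ret: "AE \<omega> in M. \<exists>n>0. fst (Z n \<omega>) = int k"
proof (rule AE_I')
  let ?A = "{\<omega>\<in>space M. \<forall>n. Ev (int k) n \<omega>}"
  have A: "?A \<in> sets M" by measurable
  have "(\<lambda>n. emeasure M {\<omega>\<in>space M. Ev (int k) n \<omega>}) \<longlonglongrightarrow> 0"
    by (rule ennreal_lim0[OF E_fin])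
  moreover have "emeasure M ?A \<le> emeasure M {\<omega>\<in>space M. Ev (int k) n \<omega>}" for n
    by (intro emeasure_mono) auto
  ultimately have "emeasure M ?A \<le> 0"
    by (intro LIMSEQ_le_const) auto
  then show "?A \<in> null_sets M" using A by (simp add: null_sets_def)
  show "{\<omega> \<in> space M. \<not> (\<exists>n>0. fst (Z n \<omega>) = int k)} \<subseteq> ?A"
  proof (intro subsetI)
    fix \<omega> assume a: "\<omega> \<in> {\<omega> \<in> space M. \<not> (\<exists>n>0. fst (Z n \<omega>) = int k)}"
    then have "\<not> (\<exists>n>0. fst (Z n \<omega>) = int k)" by simp
    then have h: "\<And>m. 0 < m \<Longrightarrow> fst (Z m \<omega>) \<noteq> int k" by blast
    have "Ev (int k) n \<omega>" for n unfolding Ev_def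
    proof
      fix m assume "m \<in> {1..n}"
      then show "fst (Z m \<omega>) \<noteq> int k" using h by simp
    qed
    then show "\<omega> \<in> ?A" using a by auto
  qed
qed

lemma AE_s0: "AE \<omega> in M. Z 0 \<omega> = (int k, l)"
proof -
  have "prob {\<omega>\<in>space M. \<forall>i\<le>0. Z i \<omega> = (\<lambda>_. (int k, l)) i} = 1"
    using mpd[of 0 "\<lambda>_. (int k, l)"] by simp
  then have "AE \<omega> in M. \<omega> \<in> {\<omega>\<in>space M. \<forall>i\<le>0. Z i \<omega> = (\<lambda>_. (int k, l)) i}"
    by (rule AE_prob_1)
  then show ?thesis by eventually_elim auto
qed

lemma T1_props:
  assumes "\<exists>n>0. fst (Z n \<omega>) = int k"
  shows "T1 Z k \<omega> > 0" "fst (Z (T1 Z k \<omega>) \<omega>) = int k" "\<And>n. Ev (int k) n \<omega> \<longleftrightarrow> n < T1 Z k \<omega>"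
proof -
  have L: "T1 Z k \<omega> > 0 \<and> fst (Z (T1 Z k \<omega>) \<omega>) = int k"
    unfolding T1_def using LeastI_ex[OF assms] by simp
  then show "T1 Z k \<omega> > 0" "fst (Z (T1 Z k \<omega>) \<omega>) = int k" by auto
  fix n
  show "Ev (int k) n \<omega> \<longleftrightarrow> n < T1 Z k \<omega>"
  proof
    assume e: "Ev (int k) n \<omega>"
    show "n < T1 Z k \<omega>"
    proof (rule ccontr)
      assume "\<not> n < T1 Z k \<omega>"
      then have "T1 Z k \<omega> \<in> {1..n}" using L by auto
      then show False using e L unfolding Ev_def by blast
    qed
  next
    assume n: "n < T1 Z k \<omega>"
    show "Ev (int k) n \<omega>" unfolding Ev_def
    proof
      fix m assume "m \<in> {1..n}"
      then have "m < T1 Z k \<omega>" "m > 0" using n by auto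
      then show "fst (Z m \<omega>) \<noteq> int k" unfolding T1_def using not_less_Least by blast
    qed
  qed
qed

end


context proc
begin

lemma ennreal_max0: "ennreal x = ennreal (max x 0)"
  by (cases "x \<ge> 0") (auto simp: ennreal_neg max_def)

definition gp :: "'w \<Rightarrow> real" where "gp \<omega> = enn2real (\<Sum>n. Dp n \<omega>)"
definition gn :: "'w \<Rightarrow> real" where "gn \<omega> = enn2real (\<Sum>n. Dn n \<omega>)"

lemma good:
  assumes w: "\<omega> \<in> space M" and ret: "\<exists>n>0. fst (Z n \<omega>) = int k" and z0: "Z 0 \<omega> = (int k, l)"
  shows "(\<Sum>n. Dp n \<omega>) < top" "(\<Sum>n. Dn n \<omega>) < top"
    "real_of_int (snd (Z (T1 Z k \<omega>) \<omega>)) = l + gp \<omega> - gn \<omega>"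
proof -
  define T where "T = T1 Z k \<omega>"
  define D where "D n = real_of_int (snd (Z (Suc n) \<omega>) - snd (Z n \<omega>))" for n
  have EvT: "Ev (int k) n \<omega> \<longleftrightarrow> n < T" for n unfolding T_def by (rule T1_props(3)[OF ret])
  have sp: "(\<Sum>n. Dp n \<omega>) = ennreal (\<Sum>n<T. max (D n) 0)"
  proof -
    have e: "Dp n \<omega> = (if n < T then ennreal (D n) else 0)" for n
      unfolding Dp_def D_def by (simp add: EvT w)
    have "(\<Sum>n. Dp n \<omega>) = (\<Sum>n<T. Dp n \<omega>)"
      by (rule suminf_finite) (simp_all add: e)
    also have "\<dots> = (\<Sum>n<T. ennreal (max (D n) 0))"
    proof (rule sum.cong[OF refl])
      fix n assume "n \<in> {..<T}"
      then have "Dp n \<omega> = ennreal (D n)" by (simp add: e)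
      also have "\<dots> = ennreal (max (D n) 0)" by (rule ennreal_max0)
      finally show "Dp n \<omega> = ennreal (max (D n) 0)" .
    qed
    also have "\<dots> = ennreal (\<Sum>n<T. max (D n) 0)" by (rule sum_ennreal) simp
    finally show ?thesis .
  qed
  have sn: "(\<Sum>n. Dn n \<omega>) = ennreal (\<Sum>n<T. max (- D n) 0)"
  proof -
    have e: "Dn n \<omega> = (if n < T then ennreal (- D n) else 0)" for n
      unfolding Dn_def D_def by (simp add: EvT w)
    have "(\<Sum>n. Dn n \<omega>) = (\<Sum>n<T. Dn n \<omega>)"
      by (rule suminf_finite) (simp_all add: e)
    also have "\<dots> = (\<Sum>n<T. ennreal (max (- D n) 0))"
    proof (rule sum.cong[OF refl])
      fix n assume "n \<in> {..<T}"
      then have "Dn n \<omega> = ennreal (- D n)" by (simp add: e)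
      also have "\<dots> = ennreal (max (- D n) 0)" by (rule ennreal_max0)
      finally show "Dn n \<omega> = ennreal (max (- D n) 0)" .
    qed
    also have "\<dots> = ennreal (\<Sum>n<T. max (- D n) 0)" by (rule sum_ennreal) simp
    finally show ?thesis .
  qed
  show "(\<Sum>n. Dp n \<omega>) < top" "(\<Sum>n. Dn n \<omega>) < top" using sp sn by simp_all
  have "gp \<omega> - gn \<omega> = (\<Sum>n<T. max (D n) 0) - (\<Sum>n<T. max (- D n) 0)"
    unfolding gp_def gn_def sp sn by (simp add: sum_nonneg)
  also have "\<dots> = (\<Sum>n<T. D n)"
    by (simp add: sum_subtractf[symmetric]) (intro sum.cong, auto simp: max_def)
  also have "\<dots> = real_of_int (snd (Z T \<omega>)) - real_of_int (snd (Z 0 \<omega>))"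
    unfolding D_def using sum_lessThan_telescope[of "\<lambda>n. real_of_int (snd (Z n \<omega>))" T] by simp
  finally show "real_of_int (snd (Z (T1 Z k \<omega>) \<omega>)) = l + gp \<omega> - gn \<omega>"
    using z0 by (simp add: T_def)
qed


lemma T1_meas[measurable]: "T1 Z k \<in> measurable M (count_space UNIV)"
proof -
  have eq: "T1 Z k = (\<lambda>\<omega>. LEAST n. 0 < n \<and> fst (Z n \<omega>) = int k)"
    by (simp add: T1_def fun_eq_iff)
  have m: "(\<lambda>\<omega>. 0 < i \<and> fst (Z i \<omega>) = int k) \<in> measurable M (count_space UNIV)" for i :: nat
  proof -
    have "(\<lambda>z::state. 0 < i \<and> fst z = int k) \<in> measurable (count_space UNIV) (count_space UNIV)"
      by (rule measurable_count_space_eq1[THEN iffD2]) auto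
    from measurable_compose[OF Zm this] show ?thesis .
  qed
  show ?thesis unfolding eq by (rule measurable_Least[OF m])
qed

lemma Y_meas[measurable]: "(\<lambda>\<omega>. real_of_int (snd (Z (T1 Z k \<omega>) \<omega>))) \<in> borel_measurable M"
  by (rule measurable_compose_countable'[where I=UNIV and g="T1 Z k" and f="\<lambda>i \<omega>. real_of_int (snd (Z i \<omega>))"]) auto

lemma gp_meas[measurable]: "gp \<in> borel_measurable M"
  unfolding gp_def[abs_def] by measurable

lemma gn_meas[measurable]: "gn \<in> borel_measurable M"
  unfolding gn_def[abs_def] by measurable

lemma AE_good: "AE \<omega> in M. (\<Sum>n. Dp n \<omega>) < top \<and> (\<Sum>n. Dn n \<omega>) < top \<and>
   real_of_int (snd (Z (T1 Z k \<omega>) \<omega>)) = l + gp \<omega> - gn \<omega>"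
  using AE_ret AE_s0 AE_space by eventually_elim (use good in blast)

lemma mult_lt_top_right: "(a::ennreal) * b < top \<Longrightarrow> 0 < a \<Longrightarrow> b < top"
  using ennreal_mult_lt_top_left[of b a] by (simp add: mult.commute)

lemma Sp_fin: "(\<integral>\<^sup>+\<omega>. (\<Sum>n. Dp n \<omega>) \<partial>M) < top"
proof (rule mult_lt_top_right[OF _ ch.pi_kk_pos])
  have "(\<integral>\<^sup>+j. FP K j * pi' j \<partial>count_space UNIV) \<le> (\<integral>\<^sup>+j. ennreal B * pi' j \<partial>count_space UNIV)"
    by (intro nn_integral_mono mult_right_mono FP_le) simp
  also have "\<dots> = ennreal B" by (simp add: nn_integral_cmult pisum)
  finally show "pi' (int k) * (\<integral>\<^sup>+\<omega>. (\<Sum>n. Dp n \<omega>) \<partial>M) < top"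
    by (simp add: Sp_int order_le_less_trans)
qed

lemma Sn_fin: "(\<integral>\<^sup>+\<omega>. (\<Sum>n. Dn n \<omega>) \<partial>M) < top"
proof (rule mult_lt_top_right[OF _ ch.pi_kk_pos])
  have "(\<integral>\<^sup>+j. FN K j * pi' j \<partial>count_space UNIV) \<le> (\<integral>\<^sup>+j. ennreal k0 * pi' j \<partial>count_space UNIV)"
    by (intro nn_integral_mono mult_right_mono FN_le) simp
  also have "\<dots> = ennreal k0" by (simp add: nn_integral_cmult pisum)
  finally show "pi' (int k) * (\<integral>\<^sup>+\<omega>. (\<Sum>n. Dn n \<omega>) \<partial>M) < top"
    by (simp add: Sn_int order_le_less_trans)
qed

lemma gp_nn: "(\<integral>\<^sup>+\<omega>. ennreal (gp \<omega>) \<partial>M) = (\<integral>\<^sup>+\<omega>. (\<Sum>n. Dp n \<omega>) \<partial>M)"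
  using AE_good by (intro nn_integral_cong_AE) (auto simp: gp_def)

lemma gn_nn: "(\<integral>\<^sup>+\<omega>. ennreal (gn \<omega>) \<partial>M) = (\<integral>\<^sup>+\<omega>. (\<Sum>n. Dn n \<omega>) \<partial>M)"
  using AE_good by (intro nn_integral_cong_AE) (auto simp: gn_def)

lemma gp_int: "integrable M gp" "integral\<^sup>L M gp = enn2real (\<integral>\<^sup>+\<omega>. (\<Sum>n. Dp n \<omega>) \<partial>M)"
  using gp_nn Sp_fin by (auto intro!: integrableI_nonneg simp: integral_eq_nn_integral gp_def)

lemma gn_int: "integrable M gn" "integral\<^sup>L M gn = enn2real (\<integral>\<^sup>+\<omega>. (\<Sum>n. Dn n \<omega>) \<partial>M)"
  using gn_nn Sn_fin by (auto intro!: integrableI_nonneg simp: integral_eq_nn_integral gn_def)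

lemma Y_int: "integrable M (\<lambda>\<omega>. real_of_int (snd (Z (T1 Z k \<omega>) \<omega>)))"
  "(\<integral>\<omega>. real_of_int (snd (Z (T1 Z k \<omega>) \<omega>)) \<partial>M) = l + enn2real (\<integral>\<^sup>+\<omega>. (\<Sum>n. Dp n \<omega>) \<partial>M) - enn2real (\<integral>\<^sup>+\<omega>. (\<Sum>n. Dn n \<omega>) \<partial>M)"
proof -
  have i: "integrable M (\<lambda>\<omega>. l + gp \<omega> - gn \<omega>)"
    using gp_int(1) gn_int(1) by auto
  have ae: "AE \<omega> in M. l + gp \<omega> - gn \<omega> = real_of_int (snd (Z (T1 Z k \<omega>) \<omega>))"
    using AE_good by eventually_elim auto
  show "integrable M (\<lambda>\<omega>. real_of_int (snd (Z (T1 Z k \<omega>) \<omega>)))"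
    by (rule integrable_cong_AE_imp[OF i _ ae]) simp
  have "(\<integral>\<omega>. real_of_int (snd (Z (T1 Z k \<omega>) \<omega>)) \<partial>M) = (\<integral>\<omega>. l + gp \<omega> - gn \<omega> \<partial>M)"
    using ae by (intro integral_cong_AE) auto
  also have "\<dots> = l + integral\<^sup>L M gp - integral\<^sup>L M gn"
    using gp_int(1) gn_int(1) by (simp add: integral_diff integral_add prob_space)
  finally show "(\<integral>\<omega>. real_of_int (snd (Z (T1 Z k \<omega>) \<omega>)) \<partial>M) = l + enn2real (\<integral>\<^sup>+\<omega>. (\<Sum>n. Dp n \<omega>) \<partial>M) - enn2real (\<integral>\<^sup>+\<omega>. (\<Sum>n. Dn n \<omega>) \<partial>M)"
    by (simp add: gp_int(2) gn_int(2))
qed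

lemma Sp_real: "pmf \<pi>1 k * enn2real (\<integral>\<^sup>+\<omega>. (\<Sum>n. Dp n \<omega>) \<partial>M) = enn2real (\<integral>\<^sup>+j. FP K j * pi' j \<partial>count_space UNIV)"
  using arg_cong[OF Sp_int, of enn2real] by (simp add: enn2real_mult pik)

lemma Sn_real: "pmf \<pi>1 k * enn2real (\<integral>\<^sup>+\<omega>. (\<Sum>n. Dn n \<omega>) \<partial>M) = enn2real (\<integral>\<^sup>+j. FN K j * pi' j \<partial>count_space UNIV)"
  using arg_cong[OF Sn_int, of enn2real] by (simp add: enn2real_mult pik)

end


context setting
begin

lemma FP_fin: "FP K j < top"
  using FP_le[of j] by (simp add: order_le_less_trans)

lemma FN_fin: "FN K j < top"
  using FN_le[of j] by (simp add: order_le_less_trans)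

lemma ep_le: "enn2real (FP K j) \<le> B"
  using FP_le[of j] B_nonneg by (intro enn2real_leI) auto

lemma en_le: "enn2real (FN K j) \<le> k0"
  using FN_le[of j] by (intro enn2real_leI) auto

lemma summ_ep: "summable (\<lambda>n. pmf \<pi>1 n * enn2real (FP K (int n)))"
  by (rule summable_comparison_test'[OF summable_mult2[OF summable_pi1, of B], of 0])
     (simp add: mult_left_mono ep_le)

lemma summ_en: "summable (\<lambda>n. pmf \<pi>1 n * enn2real (FN K (int n)))"
  by (rule summable_comparison_test'[OF summable_mult2[OF summable_pi1, of "real k0"], of 0])
     (simp add: mult_left_mono en_le)

lemma FPsum: "(\<integral>\<^sup>+j. FP K j * pi' j \<partial>count_space UNIV) = ennreal (\<Sum>n. pmf \<pi>1 n * enn2real (FP K (int n)))"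
proof -
  have "(\<integral>\<^sup>+j. FP K j * pi' j \<partial>count_space UNIV) = (\<integral>\<^sup>+n. FP K (int n) * pi' (int n) \<partial>count_space UNIV)"
    by (rule int_to_nat) (simp add: pi'_def)
  also have "\<dots> = (\<Sum>n. ennreal (pmf \<pi>1 n * enn2real (FP K (int n))))"
    by (simp add: nn_integral_count_space_nat pi'_def ennreal_mult' FP_fin mult.commute)
  also have "\<dots> = ennreal (\<Sum>n. pmf \<pi>1 n * enn2real (FP K (int n)))"
    by (rule suminf_ennreal2[OF _ summ_ep]) simp
  finally show ?thesis .
qed

lemma FNsum: "(\<integral>\<^sup>+j. FN K j * pi' j \<partial>count_space UNIV) = ennreal (\<Sum>n. pmf \<pi>1 n * enn2real (FN K (int n)))"
proof -
  have "(\<integral>\<^sup>+j. FN K j * pi' j \<partial>count_space UNIV) = (\<integral>\<^sup>+n. FN K (int n) * pi' (int n) \<partial>count_space UNIV)"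
    by (rule int_to_nat) (simp add: pi'_def)
  also have "\<dots> = (\<Sum>n. ennreal (pmf \<pi>1 n * enn2real (FN K (int n))))"
    by (simp add: nn_integral_count_space_nat pi'_def ennreal_mult' FN_fin mult.commute)
  also have "\<dots> = ennreal (\<Sum>n. pmf \<pi>1 n * enn2real (FN K (int n)))"
    by (rule suminf_ennreal2[OF _ summ_en]) simp
  finally show ?thesis .
qed

lemma os_int: "integrable (measure_pmf (one_step K (int i, 0))) (\<lambda>z. real_of_int (snd z))"
proof -
  have "integrable (measure_pmf (K (int i, 0))) (\<lambda>d. real_of_int (snd d))"
  proof (rule integrableI_bounded)
    have "(\<integral>\<^sup>+d. ennreal (norm (real_of_int (snd d))) \<partial>measure_pmf (K (int i, 0))) = FP K (int i) + FN K (int i)"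
      unfolding FP_def FN_def by (subst nn_integral_add[symmetric]) (auto simp: ennreal_abs)
    then show "(\<integral>\<^sup>+d. ennreal (norm (real_of_int (snd d))) \<partial>measure_pmf (K (int i, 0))) < \<infinity>"
      using FP_fin FN_fin by simp
  qed simp
  then show ?thesis unfolding one_step_def by simp
qed

lemma os_exp: "measure_pmf.expectation (one_step K (int i, 0)) (\<lambda>z. real_of_int (snd z)) = enn2real (FP K (int i)) - enn2real (FN K (int i))"
proof -
  have i: "integrable (measure_pmf (K (int i, 0))) (\<lambda>d. real_of_int (snd d))"
    using os_int[of i] unfolding one_step_def by simp
  have "measure_pmf.expectation (one_step K (int i, 0)) (\<lambda>z. real_of_int (snd z)) = measure_pmf.expectation (K (int i, 0)) (\<lambda>d. real_of_int (snd d))"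
    unfolding one_step_def by simp
  also have "\<dots> = enn2real (FP K (int i)) - enn2real (FN K (int i))"
    unfolding FP_def FN_def by (rule real_lebesgue_integral_def[OF i])
  finally show ?thesis .
qed

lemma summ_abs: "summable (\<lambda>i. \<bar>pmf \<pi>1 i * measure_pmf.expectation (one_step K (int i, 0)) (\<lambda>z. real_of_int (snd z))\<bar>)"
proof (rule summable_comparison_test'[OF summable_mult2[OF summable_pi1, of "B + real k0"], of 0])
  fix n
  have "\<bar>enn2real (FP K (int n)) - enn2real (FN K (int n))\<bar> \<le> B + real k0"
    using ep_le[of "int n"] en_le[of "int n"] by (simp add: abs_le_iff) (smt (verit) enn2real_nonneg)
  then show "norm \<bar>pmf \<pi>1 n * measure_pmf.expectation (one_step K (int n, 0)) (\<lambda>z. real_of_int (snd z))\<bar> \<le> pmf \<pi>1 n * (B + real k0)"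
    by (simp add: os_exp abs_mult mult_left_mono)
qed

lemma sum_exp: "(\<Sum>i. pmf \<pi>1 i * measure_pmf.expectation (one_step K (int i, 0)) (\<lambda>z. real_of_int (snd z)))
   = (\<Sum>n. pmf \<pi>1 n * enn2real (FP K (int n))) - (\<Sum>n. pmf \<pi>1 n * enn2real (FN K (int n)))"
proof -
  have "(\<lambda>i. pmf \<pi>1 i * measure_pmf.expectation (one_step K (int i, 0)) (\<lambda>z. real_of_int (snd z)))
     = (\<lambda>n. pmf \<pi>1 n * enn2real (FP K (int n)) - pmf \<pi>1 n * enn2real (FN K (int n)))"
    by (rule ext) (simp only: os_exp right_diff_distrib)
  then show ?thesis by (simp only: suminf_diff[OF summ_ep summ_en])
qed

end

theorem lemmaA1:
  fixes k0 :: nat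
    and \<mu> :: "(int \<times> int) pmf"
    and \<mu>' \<mu>'' :: "nat \<Rightarrow> (int \<times> int) pmf"
    and \<mu>ij :: "nat \<Rightarrow> nat \<Rightarrow> (int \<times> int) pmf"
    and \<delta> \<gamma> C :: real
    and \<pi>1 :: "nat pmf"
  assumes k0: "k0 \<ge> 1"
    and A1_mu: "\<And>a b. a < - int k0 \<or> b < - int k0 \<Longrightarrow> pmf \<mu> (a, b) = 0"
    and A1_mu': "\<And>j a b. j < k0 \<Longrightarrow> a < - int k0 \<or> b < - int j \<Longrightarrow> pmf (\<mu>' j) (a, b) = 0"
    and A1_mu'': "\<And>i a b. i < k0 \<Longrightarrow> b < - int k0 \<or> a < - int i \<Longrightarrow> pmf (\<mu>'' i) (a, b) = 0"
    and A1_muij: "\<And>i j a b. i < k0 \<Longrightarrow> j < k0 \<Longrightarrow> a < - int i \<or> b < - int j \<Longrightarrow> pmf (\<mu>ij i j) (a, b) = 0"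
    and A2: "\<delta> > 0" "\<gamma> > 0" "C > 0"
      "\<And>i j. (\<integral>\<^sup>+ d. ennreal (exp (\<delta> * real_of_int (fst d) + \<gamma> * real_of_int (snd d)))
                 \<partial>measure_pmf (KZ k0 \<mu> \<mu>' \<mu>'' \<mu>ij (int i, int j))) \<le> ennreal C"
    and A3: "irreducible_on (step (K0 \<mu>)) UNIV"
      "irreducible_on (step (K1 k0 \<mu> \<mu>'')) {s. fst s \<ge> 0}"
      "irreducible_on (step (K2 k0 \<mu> \<mu>')) {s. snd s \<ge> 0}"
      "irreducible_on (step (KZ k0 \<mu> \<mu>' \<mu>'' \<mu>ij)) {s. fst s \<ge> 0 \<and> snd s \<ge> 0}"
    and m1: "measure_pmf.expectation \<mu> (\<lambda>d. real_of_int (fst d)) < 0"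
    and pi1_inv: "\<And>i'. pmf \<pi>1 i' = (\<Sum>i. pmf \<pi>1 i * pX1 k0 \<mu> \<mu>'' i i')"
  shows "(\<forall>i. integrable (measure_pmf (one_step (K1 k0 \<mu> \<mu>'') (int i, 0)))
                         (\<lambda>z. real_of_int (snd z)))
       \<and> summable (\<lambda>i. \<bar>pmf \<pi>1 i * measure_pmf.expectation
                         (one_step (K1 k0 \<mu> \<mu>'') (int i, 0)) (\<lambda>z. real_of_int (snd z))\<bar>)
       \<and> (\<forall>(k::nat) (l::int) (M::'w measure) (Z::nat \<Rightarrow> 'w \<Rightarrow> state).
            markov_process M Z (K1 k0 \<mu> \<mu>'') (int k, l) \<longrightarrow>
              (AE \<omega> in M. \<exists>n>0. fst (Z n \<omega>) = int k)
            \<and> integrable M (\<lambda>\<omega>. real_of_int (snd (Z (T1 Z k \<omega>) \<omega>)))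
            \<and> (\<integral>\<omega>. real_of_int (snd (Z (T1 Z k \<omega>) \<omega>)) \<partial>M)
                = real_of_int l +
                  (\<Sum>i. pmf \<pi>1 i * measure_pmf.expectation
                         (one_step (K1 k0 \<mu> \<mu>'') (int i, 0)) (\<lambda>z. real_of_int (snd z)))
                  / pmf \<pi>1 k)"

proof (intro conjI allI impI)
  interpret S: setting k0 \<mu> \<mu>' \<mu>'' \<mu>ij \<delta> \<gamma> C \<pi>1
    by (rule setting.intro[OF k0 A1_mu A1_mu'' A2(1) A2(2) A2(3) A2(4) A3(2) pi1_inv])
  show "\<And>i. integrable (measure_pmf (one_step (K1 k0 \<mu> \<mu>'') (int i, 0))) (\<lambda>z. real_of_int (snd z))"
    by (rule S.os_int)
  show "summable (\<lambda>i. \<bar>pmf \<pi>1 i * measure_pmf.expectation (one_step (K1 k0 \<mu> \<mu>'') (int i, 0)) (\<lambda>z. real_of_int (snd z))\<bar>)"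
    by (rule S.summ_abs)
  fix k :: nat and l :: int and M :: "'w measure" and Z :: "nat \<Rightarrow> 'w \<Rightarrow> state"
  assume mpZ: "markov_process M Z (K1 k0 \<mu> \<mu>'') (int k, l)"
  interpret P: proc k0 \<mu> \<mu>' \<mu>'' \<mu>ij \<delta> \<gamma> C \<pi>1 k l M Z
    by (rule proc.intro[OF S.setting_axioms proc_axioms.intro[OF mpZ]])
  show "AE \<omega> in M. \<exists>n>0. fst (Z n \<omega>) = int k" by (rule P.AE_ret)
  show "integrable M (\<lambda>\<omega>. real_of_int (snd (Z (T1 Z k \<omega>) \<omega>)))" by (rule P.Y_int(1))
  have pk: "pmf \<pi>1 k > 0" by (rule P.pik_pos)
  define sp where "sp = (\<Sum>n. pmf \<pi>1 n * enn2real (FP (K1 k0 \<mu> \<mu>'') (int n)))"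
  define sn where "sn = (\<Sum>n. pmf \<pi>1 n * enn2real (FN (K1 k0 \<mu> \<mu>'') (int n)))"
  have sp0: "sp \<ge> 0" unfolding sp_def by (rule suminf_nonneg[OF S.summ_ep]) simp
  have sn0: "sn \<ge> 0" unfolding sn_def by (rule suminf_nonneg[OF S.summ_en]) simp
  have a1: "pmf \<pi>1 k * enn2real (\<integral>\<^sup>+\<omega>. (\<Sum>n. P.Dp n \<omega>) \<partial>M) = sp"
    using P.Sp_real unfolding S.FPsum sp_def[symmetric] using sp0 by simp
  have b1: "pmf \<pi>1 k * enn2real (\<integral>\<^sup>+\<omega>. (\<Sum>n. P.Dn n \<omega>) \<partial>M) = sn"
    using P.Sn_real unfolding S.FNsum sn_def[symmetric] using sn0 by simp
  have a: "enn2real (\<integral>\<^sup>+\<omega>. (\<Sum>n. P.Dp n \<omega>) \<partial>M) = sp / pmf \<pi>1 k"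
    using a1 pk by (simp add: eq_divide_eq mult.commute)
  have b: "enn2real (\<integral>\<^sup>+\<omega>. (\<Sum>n. P.Dn n \<omega>) \<partial>M) = sn / pmf \<pi>1 k"
    using b1 pk by (simp add: eq_divide_eq mult.commute)
  show "(\<integral>\<omega>. real_of_int (snd (Z (T1 Z k \<omega>) \<omega>)) \<partial>M) = real_of_int l +
        (\<Sum>i. pmf \<pi>1 i * measure_pmf.expectation (one_step (K1 k0 \<mu> \<mu>'') (int i, 0)) (\<lambda>z. real_of_int (snd z))) / pmf \<pi>1 k"
    unfolding P.Y_int(2) a b S.sum_exp sp_def[symmetric] sn_def[symmetric] by (simp add: diff_divide_distrib)
qed

end
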